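(* Let $0<\lambda<\frac12$ and let $X$ be a $d$-dimensional $(d+1)$-partite simplicial complex that is a $\frac{\lambda}{(d+1)\lambda+1}$-one-sided link expander. Let $I,J\subseteq\{0,\dots,d\}$ be nonempty disjoint color sets, and let $C^{I,J}$ be the bipartite operator of the $(I,J)$-colored walk. Then $$\lambda(C^{I,J})\le|I|\,|J|\,\lambda.$$
   Context: **Weighted simplicial complexes.** $X(k)$ denotes the faces of size $k+1$, weighted via a distribution on $X(d)$: choose a $d$-face, then a uniform chain of subfaces. Links are $X_s=\{u\setminus s:s\subseteq u\in X\}$ with conditional measures. **Link expansion.** $X$ is a $\mu$-one-sided link expander if for every $-1\le k\le d-2$ and $s\in X(k)$, the second largest eigenvalue of the random walk on the underlying graph of $X_s$ (vertices $X_s(0)$, edges $X_s(1)$) is at most $\mu$. **Partite complexes and colors.** $X$ is $(d+1)$-partite if $X(0)=V_0\sqcup\dots\sqcup V_d$ and every $d$-face has exactly one vertex in each $V_i$. The color of a face $s$ is $\mathrm{col}(s)=\{i:s\cap V_i\neq\emptyset\}$, and $X[I]=\{s\in X:\mathrm{col}(s)=I\}$, with the measure on $X[I]$ conditioned on color $I$. **Colored walk.** The $(I,J)$-colored walk is the bipartite graph $L=X[I]$, $R=X[J]$ with edges $(s,t)$ such that $s\sqcup t\in X[I\sqcup J]$, chosen with probability proportional to the measure of $s\sqcup t$ in $X[I\sqcup J]$. **Bipartite expansion.** $\lambda(B)=\sup\{\langle Bf,g\rangle:\|f\|=\|g\|=1,\ f\perp\text{constants}\}$ for the bipartite averaging operator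 $Bf(v)=\mathbb E_{w\sim v}f(w)$. *)

theory Defs
  imports Complex_Main "HOL-Library.Extended_Real"
begin

text \<open>The complex X is the downward closure of F.\<close>

definition weighted_complex :: "nat \<Rightarrow> 'a set set \<Rightarrow> ('a set \<Rightarrow> real) \<Rightarrow> bool" where
  "weighted_complex d F w \<longleftrightarrow>
     finite F \<and> F \<noteq> {} \<and> (\<forall>T\<in>F. card T = d + 1) \<and>
     (\<forall>T\<in>F. w T > 0) \<and> (\<Sum>T\<in>F. w T) = 1"

definition faces :: "'a set set \<Rightarrow> 'a set set" where
  "faces F = {s. \<exists>T\<in>F. s \<subseteq> T}"

text \<open>Measure of a face s (of size k+1) in X(k): pick a d-face T according to w,
  then a uniformly random chain of subfaces; its (k+1)-element member is a uniform
  (k+1)-subset of T.\<close>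

definition meas :: "nat \<Rightarrow> 'a set set \<Rightarrow> ('a set \<Rightarrow> real) \<Rightarrow> 'a set \<Rightarrow> real" where
  "meas d F w s = (\<Sum>T\<in>{T\<in>F. s \<subseteq> T}. w T) / real ((d + 1) choose card s)"

definition link_verts :: "'a set set \<Rightarrow> 'a set \<Rightarrow> 'a set" where
  "link_verts F s = {v. v \<notin> s \<and> insert v s \<in> faces F}"

definition link_vmeas :: "nat \<Rightarrow> 'a set set \<Rightarrow> ('a set \<Rightarrow> real) \<Rightarrow> 'a set \<Rightarrow> 'a \<Rightarrow> real" where
  "link_vmeas d F w s v =
     meas d F w (insert v s) / (\<Sum>v'\<in>link_verts F s. meas d F w (insert v' s))"

definition link_walk ::
  "nat \<Rightarrow> 'a set set \<Rightarrow> ('a set \<Rightarrow> real) \<Rightarrow> 'a set \<Rightarrow> ('a \<Rightarrow> real) \<Rightarrow> 'a \<Rightarrow> real" where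
  "link_walk d F w s f v =
     (\<Sum>u\<in>{u\<in>link_verts F s. u \<noteq> v \<and> insert u (insert v s) \<in> faces F}.
         meas d F w (insert u (insert v s)) * f u) /
     (\<Sum>u\<in>{u\<in>link_verts F s. u \<noteq> v \<and> insert u (insert v s) \<in> faces F}.
         meas d F w (insert u (insert v s)))"

text \<open>The walk is
  self-adjoint w.r.t. the link measure and fixes constants, so its spectrum is the
  eigenvalue 1 (constants) together with the eigenvalues on the orthogonal
  complement of the constants; the condition says the latter are all at most mu.\<close>
definition link_lambda2_le ::
  "nat \<Rightarrow> 'a set set \<Rightarrow> ('a set \<Rightarrow> real) \<Rightarrow> 'a set \<Rightarrow> real \<Rightarrow> bool" where
  "link_lambda2_le d F w s \<mu> \<longleftrightarrow>
     (\<forall>(f::'a \<Rightarrow> real) \<theta>.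
        (\<exists>v\<in>link_verts F s. f v \<noteq> 0) \<and>
        (\<Sum>v\<in>link_verts F s. link_vmeas d F w s v * f v) = 0 \<and>
        (\<forall>v\<in>link_verts F s. link_walk d F w s f v = \<theta> * f v)
        \<longrightarrow> \<theta> \<le> \<mu>)"

text \<open>mu-one-sided link expander: for all -1 \<le> k \<le> d-2 and s \<in> X(k),
  i.e. all faces s with card s = k+1 \<le> d-1.\<close>
definition one_sided_link_expander ::
  "nat \<Rightarrow> 'a set set \<Rightarrow> ('a set \<Rightarrow> real) \<Rightarrow> real \<Rightarrow> bool" where
  "one_sided_link_expander d F w \<mu> \<longleftrightarrow>
     (\<forall>s\<in>faces F. card s + 1 \<le> d \<longrightarrow> link_lambda2_le d F w s \<mu>)"

definition partite :: "nat \<Rightarrow> 'a set set \<Rightarrow> ('a \<Rightarrow> nat) \<Rightarrow> bool" where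
  "partite d F col \<longleftrightarrow> (\<forall>T\<in>F. inj_on col T \<and> col ` T = {0..d})"

definition colored :: "'a set set \<Rightarrow> ('a \<Rightarrow> nat) \<Rightarrow> nat set \<Rightarrow> 'a set set" where
  "colored F col I = {s\<in>faces F. col ` s = I}"

definition col_meas ::
  "nat \<Rightarrow> 'a set set \<Rightarrow> ('a set \<Rightarrow> real) \<Rightarrow> ('a \<Rightarrow> nat) \<Rightarrow> nat set \<Rightarrow> 'a set \<Rightarrow> real" where
  "col_meas d F w col I s = meas d F w s / (\<Sum>s'\<in>colored F col I. meas d F w s')"

definition col_walk ::
  "nat \<Rightarrow> 'a set set \<Rightarrow> ('a set \<Rightarrow> real) \<Rightarrow> ('a \<Rightarrow> nat) \<Rightarrow> nat set \<Rightarrow> nat set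
     \<Rightarrow> ('a set \<Rightarrow> real) \<Rightarrow> 'a set \<Rightarrow> real" where
  "col_walk d F w col I J f s =
     (\<Sum>t\<in>{t\<in>colored F col J. s \<union> t \<in> colored F col (I \<union> J)}.
         col_meas d F w col (I \<union> J) (s \<union> t) * f t) /
     (\<Sum>t\<in>{t\<in>colored F col J. s \<union> t \<in> colored F col (I \<union> J)}.
         col_meas d F w col (I \<union> J) (s \<union> t))"

definition col_inner ::
  "nat \<Rightarrow> 'a set set \<Rightarrow> ('a set \<Rightarrow> real) \<Rightarrow> ('a \<Rightarrow> nat) \<Rightarrow> nat set
     \<Rightarrow> ('a set \<Rightarrow> real) \<Rightarrow> ('a set \<Rightarrow> real) \<Rightarrow> real" where
  "col_inner d F w col I f g = (\<Sum>s\<in>colored F col I. col_meas d F w col I s * f s * g s)"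

definition col_norm ::
  "nat \<Rightarrow> 'a set set \<Rightarrow> ('a set \<Rightarrow> real) \<Rightarrow> ('a \<Rightarrow> nat) \<Rightarrow> nat set
     \<Rightarrow> ('a set \<Rightarrow> real) \<Rightarrow> real" where
  "col_norm d F w col I f = sqrt (col_inner d F w col I f f)"

text \<open>lambda(C^{I,J}) = sup { <C f, g> : ||f|| = ||g|| = 1, f orthogonal to constants },
  taken in the extended reals (so that the supremum of the empty set is -\<infinity>).\<close>
definition bip_lambda ::
  "nat \<Rightarrow> 'a set set \<Rightarrow> ('a set \<Rightarrow> real) \<Rightarrow> ('a \<Rightarrow> nat) \<Rightarrow> nat set \<Rightarrow> nat set \<Rightarrow> ereal" where
  "bip_lambda d F w col I J =
     Sup {ereal (col_inner d F w col I (col_walk d F w col I J f) g) | f g.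
            col_norm d F w col J f = 1 \<and> col_norm d F w col I g = 1 \<and>
            col_inner d F w col J f (\<lambda>_. 1) = 0}"

end

theory Submission
  imports Defs "HOL-Analysis.Analysis"
begin

lemma quad_zero:
  fixes \<alpha> \<beta> :: real
  assumes "\<And>t. \<alpha> * t + \<beta> * t^2 \<le> 0"
  shows "\<alpha> = 0"
proof (rule ccontr)
  assume na: "\<alpha> \<noteq> 0"
  define c where "c = \<bar>\<beta>\<bar> + 1"
  have pos: "c > 0" and bc: "- c \<le> \<beta>" by (auto simp: c_def)
  define t where "t = \<alpha> / (2 * c)"
  have e1: "\<alpha> * t = \<alpha>^2 / (2 * c)" by (simp add: t_def power2_eq_square)
  have e2: "c * t^2 = \<alpha>^2 / (4 * c)" using pos by (simp add: t_def power2_eq_square)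
  have "\<beta> * t^2 \<ge> (- c) * t^2" using bc by (intro mult_right_mono) auto
  hence "\<alpha> * t + \<beta> * t^2 \<ge> \<alpha>^2 / (2 * c) - \<alpha>^2 / (4 * c)" using e1 e2 by simp
  also have "\<alpha>^2 / (2 * c) - \<alpha>^2 / (4 * c) = \<alpha>^2 / (4 * c)" using pos by (simp add: field_simps)
  finally have "\<alpha> * t + \<beta> * t^2 \<ge> \<alpha>^2 / (4 * c)" .
  moreover have "\<alpha>^2 / (4 * c) > 0" using na pos by simp
  ultimately show False using assms[of t] by linarith
qed

definition bil :: "'a set \<Rightarrow> ('a \<Rightarrow> 'a \<Rightarrow> real) \<Rightarrow> ('a \<Rightarrow> real) \<Rightarrow> ('a \<Rightarrow> real) \<Rightarrow> real" where
  "bil L a x y = (\<Sum>v\<in>L. \<Sum>u\<in>L. a v u * x u * y v)"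

lemma bil_expand:
  fixes x q :: "'a \<Rightarrow> real"
  shows   "bil L a (\<lambda>v. x v + t * q v) (\<lambda>v. x v + t * q v) =
     bil L a x x + t * (bil L a q x + bil L a x q) + t^2 * bil L a q q"
  by (simp add: bil_def algebra_simps power2_eq_square sum.distrib sum_distrib_left)

lemma bil_sym:
  assumes "\<forall>u\<in>L. \<forall>v\<in>L. a u v = a v u"
  shows "bil L a x y = bil L a y x"
proof -
  have "bil L a x y = (\<Sum>u\<in>L. \<Sum>v\<in>L. a v u * x u * y v)"
    unfolding bil_def by (rule sum.swap)
  also have "\<dots> = (\<Sum>u\<in>L. \<Sum>v\<in>L. a u v * y v * x u)"
    using assms by (intro sum.cong refl) (auto simp: mult_ac)
  finally show ?thesis by (simp add: bil_def)
qed

lemma norm_expand: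
  fixes p x q :: "'a \<Rightarrow> real"
  shows "(\<Sum>v\<in>L. p v * (x v + t * q v)^2) =
     (\<Sum>v\<in>L. p v * x v^2) + t * (2 * (\<Sum>v\<in>L. p v * x v * q v)) + t^2 * (\<Sum>v\<in>L. p v * q v^2)"
proof -
  have "(\<Sum>v\<in>L. p v * (x v + t * q v)^2) = (\<Sum>v\<in>L. p v * x v^2 + t * (2 * (p v * x v * q v)) + t^2 * (p v * q v^2))"
    by (intro sum.cong refl) (simp add: algebra_simps power2_eq_square)
  then show ?thesis by (simp add: sum.distrib sum_distrib_left)
qed

lemma abs_le_sq1: "\<bar>x::real\<bar> \<le> 1 + x^2"
proof -
  have "0 \<le> (\<bar>x\<bar> - 1)^2" by simp
  also have "(\<bar>x\<bar> - 1)^2 = x^2 - 2 * \<bar>x\<bar> + 1" by (simp add: power2_eq_square algebra_simps)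
  finally show ?thesis by (simp add: zero_le_power2 add_increasing)
qed

lemma spectral_abstract:
  fixes L :: "'a set" and p :: "'a \<Rightarrow> real" and a :: "'a \<Rightarrow> 'a \<Rightarrow> real"
    and K :: "('a \<Rightarrow> real) \<Rightarrow> 'a \<Rightarrow> real" and h :: "'a \<Rightarrow> real"
  assumes fin: "finite L" and pos: "\<forall>v\<in>L. p v > 0"
    and sym: "\<forall>u\<in>L. \<forall>v\<in>L. a u v = a v u"
    and rows: "\<forall>v\<in>L. (\<Sum>u\<in>L. a v u) = p v"
    and Kdef: "\<And>f v. v \<in> L \<Longrightarrow> p v * K f v = (\<Sum>u\<in>L. a v u * f u)"
    and eig: "\<forall>(f::'a \<Rightarrow> real) \<theta>. (\<exists>v\<in>L. f v \<noteq> 0) \<and> (\<Sum>v\<in>L. p v * f v) = 0 \<and>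
                 (\<forall>v\<in>L. K f v = \<theta> * f v) \<longrightarrow> \<theta> \<le> \<mu>"
    and cent: "(\<Sum>v\<in>L. p v * h v) = 0"
  shows "bil L a h h \<le> \<mu> * (\<Sum>v\<in>L. p v * h v^2)"
proof -
  let ?N = "\<lambda>f. \<Sum>v\<in>L. p v * f v^2"
  let ?M = "\<lambda>f. \<Sum>v\<in>L. p v * f v"
  have N0: "\<forall>v\<in>L. f v = 0" if "?N f = 0" for f
  proof -
    have "\<forall>v\<in>L. p v * f v^2 = 0"
      using that fin pos by (subst sum_nonneg_eq_0_iff[symmetric]) (auto intro!: sum_nonneg)
    then show ?thesis using pos by (metis less_irrefl mult_eq_0_iff power_eq_0_iff)
  qed
  have B0: "bil L a f f = 0" if "\<forall>v\<in>L. f v = 0" for f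
    using that by (simp add: bil_def)
  have Nnn: "?N f \<ge> 0" for f using pos by (auto intro!: sum_nonneg)
  show ?thesis
  proof (cases "?N h = 0")
    case True
    then show ?thesis using B0 N0 by simp
  next
    case False
    define R where "R = (\<lambda>v. 1 + 1 / p v)"
    define KK where "KK = (\<lambda>v. if v \<in> L then {- R v .. R v} else {0::real})"
    define C where "C = Pi UNIV KK \<inter> {f. ?M f = 0} \<inter> {f. ?N f = 1}"
    define sc where "sc = (\<lambda>f v. if v \<in> L then f v / sqrt (?N f) else 0)"
    have sc_in: "sc f \<in> C" if "?M f = 0" "?N f \<noteq> 0" for f
    proof -
      have Np: "?N f > 0" using Nnn[of f] that(2) by linarith
      have "?N (sc f) = (\<Sum>v\<in>L. p v * f v^2 / ?N f)"
        unfolding sc_def by (intro sum.cong refl) (simp add: power_divide real_sqrt_pow2[OF Nnn])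
      also have "\<dots> = (\<Sum>v\<in>L. p v * f v^2) / ?N f" by (rule sum_divide_distrib[symmetric])
      finally have "?N (sc f) = (\<Sum>v\<in>L. p v * f v^2) / ?N f" .
      hence n1: "?N (sc f) = 1" using Np by simp
      have "?M (sc f) = ?M f / sqrt (?N f)"
        unfolding sc_def by (simp add: sum_divide_distrib)
      hence m0: "?M (sc f) = 0" using that by simp
      have "sc f v \<in> KK v" for v
      proof (cases "v \<in> L")
        case True
        have "p v * (sc f v)^2 \<le> ?N (sc f)"
          using fin True pos by (intro member_le_sum) auto
        hence "p v * (sc f v)^2 \<le> 1" using n1 by simp
        moreover have "p v > 0" using pos True by auto
        ultimately have "(sc f v)^2 \<le> 1 / p v" by (simp add: pos_le_divide_eq mult.commute)
        moreover have "\<bar>sc f v\<bar> \<le> 1 + (sc f v)^2" by (rule abs_le_sq1)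
        ultimately have "\<bar>sc f v\<bar> \<le> R v" unfolding R_def by linarith
        then show ?thesis using True unfolding KK_def by auto
      next
        case False then show ?thesis unfolding KK_def sc_def by simp
      qed
      then show ?thesis unfolding C_def using n1 m0 by auto
    qed
    have Bsc: "bil L a (sc f) (sc f) = bil L a f f / ?N f" for f
      unfolding bil_def sc_def
      by (simp add: sum_divide_distrib power2_eq_square[symmetric] real_sqrt_pow2[OF Nnn])
    have Ccomp: "compact C"
    proof -
      have "compact (Pi UNIV KK)"
      proof -
        have "compactin (product_topology (\<lambda>_. euclidean) UNIV) (PiE UNIV KK)"
          by (simp add: compactin_PiE KK_def)
        then show ?thesis by (simp add: euclidean_product_topology PiE_UNIV_domain)
      qed
      moreover have "closed ({f. ?M f = 0} \<inter> {f::'a\<Rightarrow>real. ?N f = 1})"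
        by (intro closed_Int closed_Collect_eq continuous_intros
              continuous_on_product_then_coordinatewise continuous_on_id)
      ultimately show ?thesis unfolding C_def by (simp add: Int_assoc compact_Int_closed)
    qed
    have Cne: "C \<noteq> {}" using sc_in[OF cent False] by auto
    have "continuous_on C (\<lambda>f. bil L a f f)"
      unfolding bil_def
      by (intro continuous_intros continuous_on_product_then_coordinatewise continuous_on_id)
    then obtain h0 where h0C: "h0 \<in> C" and h0max: "\<forall>f\<in>C. bil L a f f \<le> bil L a h0 h0"
      using continuous_attains_sup[OF Ccomp Cne] by blast
    define \<theta> where "\<theta> = bil L a h0 h0"
    have h0M: "?M h0 = 0" and h0N: "?N h0 = 1" using h0C unfolding C_def by auto
    have claim1: "bil L a f f \<le> \<theta> * ?N f" if "?M f = 0" for f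
    proof (cases "?N f = 0")
      case True then show ?thesis using B0 N0 by simp
    next
      case False
      have "bil L a (sc f) (sc f) \<le> \<theta>" using h0max sc_in[OF that False] \<theta>_def by auto
      hence "bil L a f f / ?N f \<le> \<theta>" using Bsc by simp
      moreover have "?N f > 0" using Nnn[of f] False by linarith
      ultimately show ?thesis by (simp add: field_simps)
    qed
    have claim2: "bil L a h0 q = \<theta> * (\<Sum>v\<in>L. p v * h0 v * q v)" if "?M q = 0" for q
    proof -
      let ?\<alpha> = "2 * (bil L a h0 q - \<theta> * (\<Sum>v\<in>L. p v * h0 v * q v))"
      let ?\<beta> = "bil L a q q - \<theta> * ?N q"
      have "?\<alpha> * t + ?\<beta> * t^2 \<le> 0" for t
      proof -
        have "?M (\<lambda>v. h0 v + t * q v) = 0"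
        proof -
          have "?M (\<lambda>v. h0 v + t * q v) = ?M h0 + t * ?M q"
            by (simp add: distrib_left sum.distrib sum_distrib_left mult.left_commute)
          then show ?thesis using h0M that by simp
        qed
        hence "bil L a (\<lambda>v. h0 v + t * q v) (\<lambda>v. h0 v + t * q v) \<le> \<theta> * ?N (\<lambda>v. h0 v + t * q v)"
          by (rule claim1)
        then show ?thesis
          unfolding bil_expand norm_expand h0N bil_sym[OF sym, of q h0] \<theta>_def[symmetric]
          by (simp add: algebra_simps)
      qed
      then have "?\<alpha> = 0" by (rule quad_zero)
      then show ?thesis by simp
    qed
    define e where "e = (\<lambda>v. K h0 v - \<theta> * h0 v)"
    have eM: "?M e = 0"
    proof -
      have "?M e = (\<Sum>v\<in>L. p v * K h0 v) - \<theta> * ?M h0"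
        unfolding e_def by (simp add: algebra_simps sum_subtractf sum_distrib_left)
      also have "(\<Sum>v\<in>L. p v * K h0 v) = (\<Sum>v\<in>L. \<Sum>u\<in>L. a v u * h0 u)"
        using Kdef by (intro sum.cong) auto
      also have "\<dots> = (\<Sum>u\<in>L. \<Sum>v\<in>L. a v u * h0 u)" by (rule sum.swap)
      also have "\<dots> = (\<Sum>u\<in>L. (\<Sum>v\<in>L. a u v) * h0 u)"
        using sym by (intro sum.cong refl) (auto simp: sum_distrib_right)
      also have "\<dots> = ?M h0" using rows by (intro sum.cong) auto
      finally show ?thesis using h0M by simp
    qed
    have "bil L a h0 e = (\<Sum>v\<in>L. p v * K h0 v * e v)"
      unfolding bil_def
    proof (intro sum.cong refl)
      fix v assume v: "v \<in> L"
      have "p v * K h0 v * e v = (\<Sum>u\<in>L. a v u * h0 u) * e v" using Kdef[OF v] by simp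
      then show "(\<Sum>u\<in>L. a v u * h0 u * e v) = p v * K h0 v * e v" by (simp add: sum_distrib_right)
    qed
    hence "(\<Sum>v\<in>L. p v * K h0 v * e v) = \<theta> * (\<Sum>v\<in>L. p v * h0 v * e v)"
      using claim2[OF eM] by simp
    moreover have "?N e = (\<Sum>v\<in>L. p v * K h0 v * e v) - \<theta> * (\<Sum>v\<in>L. p v * h0 v * e v)"
    proof -
      have "\<And>v. p v * e v^2 = p v * K h0 v * e v - \<theta> * (p v * h0 v * e v)"
        by (simp add: e_def power2_eq_square algebra_simps)
      hence "?N e = (\<Sum>v\<in>L. p v * K h0 v * e v - \<theta> * (p v * h0 v * e v))" by simp
      then show ?thesis by (simp add: sum_subtractf sum_distrib_left)
    qed
    ultimately have "?N e = 0" by simp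
    hence e0: "\<forall>v\<in>L. K h0 v = \<theta> * h0 v" using N0[of e] unfolding e_def by simp
    have "\<exists>v\<in>L. h0 v \<noteq> 0" using N0[of h0] h0N by (metis (no_types, lifting) h0N mult_zero_right power_zero_numeral sum.neutral zero_neq_one)
    hence th: "\<theta> \<le> \<mu>" using eig h0M e0 by blast
    have "bil L a h h \<le> \<theta> * ?N h" by (rule claim1[OF cent])
    also have "\<dots> \<le> \<mu> * ?N h" using th Nnn[of h] by (intro mult_right_mono) auto
    finally show ?thesis .
  qed
qed

lemma cs_sum:
  fixes w f g :: "'b \<Rightarrow> real"
  assumes fin: "finite A" and wnn: "\<forall>x\<in>A. w x \<ge> 0"
  shows "(\<Sum>x\<in>A. w x * f x * g x) \<le> sqrt (\<Sum>x\<in>A. w x * f x^2) * sqrt (\<Sum>x\<in>A. w x * g x^2)"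
proof -
  let ?A = "\<Sum>x\<in>A. w x * f x^2" and ?B = "\<Sum>x\<in>A. w x * g x^2" and ?S = "\<Sum>x\<in>A. w x * f x * g x"
  have An: "?A \<ge> 0" and Bn: "?B \<ge> 0" using wnn by (auto intro!: sum_nonneg)
  have key: "2 * a * b * ?S \<le> a^2 * ?B + b^2 * ?A" for a b :: real
  proof -
    have "0 \<le> (\<Sum>x\<in>A. w x * (a * g x - b * f x)^2)" using wnn by (auto intro!: sum_nonneg)
    also have "\<dots> = a^2 * ?B + b^2 * ?A - 2 * a * b * ?S"
    proof -
      have "\<And>x. w x * (a * g x - b * f x)^2 = a^2 * (w x * g x^2) + b^2 * (w x * f x^2) - 2 * a * b * (w x * f x * g x)"
        by (simp add: power2_eq_square algebra_simps)
      then show ?thesis by (simp add: sum.distrib sum_subtractf sum_distrib_left)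
    qed
    finally show ?thesis by simp
  qed
  show ?thesis
  proof (cases "?A = 0 \<or> ?B = 0")
    case True
    have "?S = 0"
    proof -
      have "\<forall>x\<in>A. w x * f x * g x = 0"
      proof
        fix x assume x: "x \<in> A"
        from True show "w x * f x * g x = 0"
        proof
          assume "?A = 0"
          hence "\<forall>x\<in>A. w x * f x^2 = 0" using fin wnn by (subst sum_nonneg_eq_0_iff[symmetric]) auto
          then show ?thesis using x by (auto simp: power2_eq_square)
        next
          assume "?B = 0"
          hence "\<forall>x\<in>A. w x * g x^2 = 0" using fin wnn by (subst sum_nonneg_eq_0_iff[symmetric]) auto
          then show ?thesis using x by (auto simp: power2_eq_square)
        qed
      qed
      then show ?thesis by (intro sum.neutral) blast
    qed
    then show ?thesis using An Bn by simp
  next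
    case False
    hence Ap: "?A > 0" and Bp: "?B > 0" using An Bn by auto
    have "2 * sqrt ?A * sqrt ?B * ?S \<le> (sqrt ?A)^2 * ?B + (sqrt ?B)^2 * ?A" by (rule key)
    also have "\<dots> = 2 * sqrt ?A * sqrt ?B * (sqrt ?A * sqrt ?B)"
      using An Bn by (simp add: power2_eq_square[symmetric] real_sqrt_pow2) (simp add: power2_eq_square algebra_simps)
    finally show ?thesis using Ap Bp by (simp add: mult_le_cancel_left_pos)
  qed
qed

lemma cs_sqrt:
  fixes a b :: "'b \<Rightarrow> real"
  assumes fin: "finite X" and "\<forall>x\<in>X. a x \<ge> 0" "\<forall>x\<in>X. b x \<ge> 0"
  shows "(\<Sum>x\<in>X. sqrt (a x) * sqrt (b x)) \<le> sqrt (\<Sum>x\<in>X. a x) * sqrt (\<Sum>x\<in>X. b x)"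
proof -
  have "(\<Sum>x\<in>X. 1 * sqrt (a x) * sqrt (b x)) \<le> sqrt (\<Sum>x\<in>X. 1 * sqrt (a x)^2) * sqrt (\<Sum>x\<in>X. 1 * sqrt (b x)^2)"
    by (rule cs_sum[OF fin]) auto
  moreover have "(\<Sum>x\<in>X. 1 * sqrt (a x)^2) = (\<Sum>x\<in>X. a x)" using assms by (intro sum.cong) auto
  moreover have "(\<Sum>x\<in>X. 1 * sqrt (b x)^2) = (\<Sum>x\<in>X. b x)" using assms by (intro sum.cong) auto
  ultimately show ?thesis by simp
qed

lemma var_id:
  fixes w f :: "'b \<Rightarrow> real"
  assumes W: "(\<Sum>x\<in>A. w x) > 0" and c: "c = (\<Sum>x\<in>A. w x * f x) / (\<Sum>x\<in>A. w x)"
  shows "(\<Sum>x\<in>A. w x * (f x - c)) = 0"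
    and "(\<Sum>x\<in>A. w x * (f x - c)^2) = (\<Sum>x\<in>A. w x * f x^2) - (\<Sum>x\<in>A. w x) * c^2"
proof -
  have m: "(\<Sum>x\<in>A. w x * f x) = c * (\<Sum>x\<in>A. w x)" using W c by simp
  show "(\<Sum>x\<in>A. w x * (f x - c)) = 0"
    using m by (simp add: right_diff_distrib sum_subtractf sum_distrib_left[symmetric] mult.commute)
  have "\<And>x. w x * (f x - c)^2 = w x * f x^2 - 2 * c * (w x * f x) + c^2 * w x"
    by (simp add: power2_eq_square algebra_simps)
  hence "(\<Sum>x\<in>A. w x * (f x - c)^2) = (\<Sum>x\<in>A. w x * f x^2) - 2 * c * (\<Sum>x\<in>A. w x * f x) + c^2 * (\<Sum>x\<in>A. w x)"
    by (simp add: sum.distrib sum_subtractf sum_distrib_left)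
  then show "(\<Sum>x\<in>A. w x * (f x - c)^2) = (\<Sum>x\<in>A. w x * f x^2) - (\<Sum>x\<in>A. w x) * c^2"
    using m by (simp add: power2_eq_square algebra_simps)
qed

locale cplx =
  fixes d :: nat and F :: "'a set set" and w :: "'a set \<Rightarrow> real" and col :: "'a \<Rightarrow> nat"
  assumes wc: "weighted_complex d F w" and pt: "partite d F col"
begin

definition P :: "nat set \<Rightarrow> 'a set \<Rightarrow> 'a set" where
  "P S T = {v\<in>T. col v \<in> S}"

definition Fs :: "'a set \<Rightarrow> 'a set set" where
  "Fs s = {T\<in>F. s \<subseteq> T}"

definition W :: "'a set \<Rightarrow> real" where
  "W s = (\<Sum>T\<in>Fs s. w T)"

lemma finF: "finite F" using wc by (simp add: weighted_complex_def)
lemma cardT: "T \<in> F \<Longrightarrow> card T = d + 1" using wc by (simp add: weighted_complex_def)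
lemma finT: "T \<in> F \<Longrightarrow> finite T" using cardT[of T] by (cases "finite T") auto
lemma wpos: "T \<in> F \<Longrightarrow> w T > 0" using wc by (simp add: weighted_complex_def)
lemma wsum: "(\<Sum>T\<in>F. w T) = 1" using wc by (simp add: weighted_complex_def)
lemma injT: "T \<in> F \<Longrightarrow> inj_on col T" using pt by (simp add: partite_def)
lemma colT: "T \<in> F \<Longrightarrow> col ` T = {0..d}" using pt by (simp add: partite_def)

lemma finFs: "finite (Fs s)" using finF by (simp add: Fs_def)
lemma Fs_sub: "Fs s \<subseteq> F" by (auto simp: Fs_def)
lemma W_nonneg: "W s \<ge> 0" unfolding W_def
proof (rule sum_nonneg)
  fix T assume "T \<in> Fs s" then show "w T \<ge> 0" using wpos Fs_sub by (meson less_imp_le subsetD)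
qed
lemma W_pos: assumes "Fs s \<noteq> {}" shows "W s > 0"
  unfolding W_def
proof (rule sum_pos[OF finFs assms])
  fix T assume "T \<in> Fs s" then show "w T > 0" using wpos Fs_sub by auto
qed

lemma char:
  assumes T: "T \<in> F" and u: "col ` u = S"
  shows "u \<subseteq> T \<longleftrightarrow> P S T = u"
proof
  assume uT: "u \<subseteq> T"
  show "P S T = u"
  proof
    show "u \<subseteq> P S T" using uT u by (auto simp: P_def)
    show "P S T \<subseteq> u"
    proof
      fix v assume "v \<in> P S T"
      hence v: "v \<in> T" "col v \<in> S" by (auto simp: P_def)
      then obtain v' where v': "v' \<in> u" "col v' = col v" using u by force
      hence "v' = v" using injT[OF T] uT v(1) by (auto dest: inj_onD)
      then show "v \<in> u" using v' by simp
    qed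
  qed
next
  assume "P S T = u" then show "u \<subseteq> T" by (auto simp: P_def)
qed

lemma col_P: assumes "T \<in> F" "S \<subseteq> {0..d}" shows "col ` P S T = S"
proof -
  have "col ` P S T = S \<inter> col ` T" by (auto simp: P_def)
  then show ?thesis using colT[OF assms(1)] assms(2) by auto
qed

lemma P_Un: "P (I \<union> J) T = P I T \<union> P J T" by (auto simp: P_def)

lemma P_single:
  assumes T: "T \<in> F" and j: "j \<le> d"
  obtains v where "v \<in> T" "col v = j" "P {j} T = {v}"
proof -
  from colT[OF T] j obtain v where v: "v \<in> T" "col v = j" by force
  have "P {j} T = {v}" using v injT[OF T] by (auto simp: P_def dest: inj_onD)
  then show ?thesis using that v by blast
qed

lemma Fs_split:
  assumes x: "x \<in> P {j} ` Fs s" and j: "j \<le> d"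
  shows "Fs (s \<union> x) = {T\<in>Fs s. P {j} T = x}"
proof -
  from x obtain T0 where T0: "T0 \<in> Fs s" "x = P {j} T0" by auto
  have "col ` x = {j}"
    using T0 j col_P[of T0 "{j}"] by (auto simp: Fs_def)
  then show ?thesis using char[of _ x "{j}"] by (auto simp: Fs_def)
qed

end

context cplx begin

definition Q :: "real \<Rightarrow> 'a set \<Rightarrow> nat set \<Rightarrow> nat set \<Rightarrow> bool" where
  "Q c s I J \<longleftrightarrow> (\<forall>f g. (\<Sum>T\<in>Fs s. w T * f (P J T)) = 0 \<longrightarrow> (\<Sum>T\<in>Fs s. w T * g (P I T)) = 0 \<longrightarrow>
     (\<Sum>T\<in>Fs s. w T * f (P J T) * g (P I T)) \<le>
       c * sqrt (\<Sum>T\<in>Fs s. w T * f (P J T)^2) * sqrt (\<Sum>T\<in>Fs s. w T * g (P I T)^2))"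

lemma Q_sym: assumes "Q c s I J" shows "Q c s J I"
  unfolding Q_def
proof (intro allI impI)
  fix f g :: "'a set \<Rightarrow> real"
  assume cf: "(\<Sum>T\<in>Fs s. w T * f (P I T)) = 0" and cg: "(\<Sum>T\<in>Fs s. w T * g (P J T)) = 0"
  have "(\<Sum>T\<in>Fs s. w T * g (P J T) * f (P I T)) \<le>
       c * sqrt (\<Sum>T\<in>Fs s. w T * g (P J T)^2) * sqrt (\<Sum>T\<in>Fs s. w T * f (P I T)^2)"
    using assms cf cg unfolding Q_def by blast
  then show "(\<Sum>T\<in>Fs s. w T * f (P I T) * g (P J T)) \<le>
       c * sqrt (\<Sum>T\<in>Fs s. w T * f (P I T)^2) * sqrt (\<Sum>T\<in>Fs s. w T * g (P J T)^2)"
    by (simp add: mult_ac)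
qed

lemma split_step:
  assumes j: "j \<le> d" and jJ: "j \<in> J"
    and IH1: "\<forall>x\<in>P {j} ` Fs s. Q c1 (s \<union> x) I (J - {j})" and IH2: "Q c2 s I {j}"
    and c1: "c1 \<ge> 0" and c2: "c2 \<ge> 0"
  shows "Q (c1 + c2) s I J"
  unfolding Q_def
proof (intro allI impI)
  fix f g :: "'a set \<Rightarrow> real"
  assume cf: "(\<Sum>T\<in>Fs s. w T * f (P J T)) = 0" and cg: "(\<Sum>T\<in>Fs s. w T * g (P I T)) = 0"
  define J' where "J' = J - {j}"
  define G where "G = P {j}"
  define X where "X = G ` Fs s"
  define Fx where "Fx x = {T\<in>Fs s. G T = x}" for x
  define Wx where "Wx x = (\<Sum>T\<in>Fx x. w T)" for x
  define A where "A = (\<Sum>T\<in>Fs s. w T * f (P J T)^2)"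
  define B where "B = (\<Sum>T\<in>Fs s. w T * g (P I T)^2)"
  define Af where "Af x = (\<Sum>T\<in>Fx x. w T * f (P J T)^2)" for x
  define Ag where "Ag x = (\<Sum>T\<in>Fx x. w T * g (P I T)^2)" for x
  have finX: "finite X" unfolding X_def using finFs by simp
  have Fx_eq: "Fx x = Fs (s \<union> x)" if "x \<in> X" for x
    using Fs_split[of x j s] that j unfolding Fx_def X_def G_def by simp
  have Fx_ne: "Fx x \<noteq> {}" if "x \<in> X" for x using that unfolding Fx_def X_def by auto
  have Wxpos: "Wx x > 0" if "x \<in> X" for x
    using W_pos[of "s \<union> x"] Fx_eq[OF that] Fx_ne[OF that] unfolding Wx_def W_def by simp
  have wnn: "\<forall>T\<in>Fx x. w T \<ge> 0" for x using wpos Fs_sub unfolding Fx_def by (auto intro: less_imp_le)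
  have grp: "(\<Sum>T\<in>Fs s. H T) = (\<Sum>x\<in>X. \<Sum>T\<in>Fx x. H T)" for H :: "'a set \<Rightarrow> real"
    unfolding X_def Fx_def by (rule sum.image_gen[OF finFs])
  have PJ: "P J T = x \<union> P J' T" if "T \<in> Fx x" for T x
  proof -
    have "J = {j} \<union> J'" using jJ by (auto simp: J'_def)
    then show ?thesis using P_Un[of "{j}" J' T] that unfolding Fx_def G_def by auto
  qed
  define \<phi> where "\<phi> x = (\<Sum>T\<in>Fx x. w T * f (P J T)) / Wx x" for x
  define \<psi> where "\<psi> x = (\<Sum>T\<in>Fx x. w T * g (P I T)) / Wx x" for x
  define f' where "f' x y = f (x \<union> y) - \<phi> x" for x y
  define g' where "g' x y = g y - \<psi> x" for x y
  have f'eq: "f' x (P J' T) = f (P J T) - \<phi> x" if "T \<in> Fx x" for x T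
    using PJ[OF that] unfolding f'_def by simp
  have fvar: "(\<Sum>T\<in>Fx x. w T * f' x (P J' T)) = 0"
    "(\<Sum>T\<in>Fx x. w T * f' x (P J' T)^2) = Af x - Wx x * \<phi> x^2" if x: "x \<in> X" for x
  proof -
    have e1: "(\<Sum>T\<in>Fx x. w T * f' x (P J' T)) = (\<Sum>T\<in>Fx x. w T * (f (P J T) - \<phi> x))"
      using f'eq by (intro sum.cong) auto
    have e2: "(\<Sum>T\<in>Fx x. w T * f' x (P J' T)^2) = (\<Sum>T\<in>Fx x. w T * (f (P J T) - \<phi> x)^2)"
      using f'eq by (intro sum.cong) auto
    note v = var_id[of w "Fx x" "\<phi> x" "\<lambda>T. f (P J T)"]
    show "(\<Sum>T\<in>Fx x. w T * f' x (P J' T)) = 0" unfolding e1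
      using v Wxpos[OF x] unfolding Wx_def \<phi>_def by simp
    show "(\<Sum>T\<in>Fx x. w T * f' x (P J' T)^2) = Af x - Wx x * \<phi> x^2" unfolding e2
      using v Wxpos[OF x] unfolding Wx_def \<phi>_def Af_def by simp
  qed
  have gvar: "(\<Sum>T\<in>Fx x. w T * g' x (P I T)) = 0"
    "(\<Sum>T\<in>Fx x. w T * g' x (P I T)^2) = Ag x - Wx x * \<psi> x^2" if x: "x \<in> X" for x
  proof -
    note v = var_id[of w "Fx x" "\<psi> x" "\<lambda>T. g (P I T)"]
    show "(\<Sum>T\<in>Fx x. w T * g' x (P I T)) = 0"
      using v Wxpos[OF x] unfolding Wx_def \<psi>_def g'_def by simp
    show "(\<Sum>T\<in>Fx x. w T * g' x (P I T)^2) = Ag x - Wx x * \<psi> x^2"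
      using v Wxpos[OF x] unfolding Wx_def \<psi>_def Ag_def g'_def by simp
  qed
  have decomp: "(\<Sum>T\<in>Fx x. w T * f (P J T) * g (P I T)) =
      (\<Sum>T\<in>Fx x. w T * f' x (P J' T) * g' x (P I T)) + Wx x * \<phi> x * \<psi> x" if x: "x \<in> X" for x
  proof -
    have mf: "(\<Sum>T\<in>Fx x. w T * f (P J T)) = \<phi> x * Wx x" using Wxpos[OF x] unfolding \<phi>_def by simp
    have mg: "(\<Sum>T\<in>Fx x. w T * g (P I T)) = \<psi> x * Wx x" using Wxpos[OF x] unfolding \<psi>_def by simp
    have "(\<Sum>T\<in>Fx x. w T * f' x (P J' T) * g' x (P I T)) =
          (\<Sum>T\<in>Fx x. w T * f (P J T) * g (P I T) - \<psi> x * (w T * f (P J T)) - \<phi> x * (w T * g (P I T)) + \<phi> x * \<psi> x * w T)"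
      by (intro sum.cong refl) (simp add: f'eq g'_def algebra_simps)
    also have "\<dots> = (\<Sum>T\<in>Fx x. w T * f (P J T) * g (P I T)) - \<psi> x * (\<Sum>T\<in>Fx x. w T * f (P J T))
        - \<phi> x * (\<Sum>T\<in>Fx x. w T * g (P I T)) + \<phi> x * \<psi> x * Wx x"
      unfolding Wx_def by (simp add: sum.distrib sum_subtractf sum_distrib_left)
    finally show ?thesis using mf mg by (simp add: algebra_simps)
  qed
  have b1: "(\<Sum>T\<in>Fx x. w T * f' x (P J' T) * g' x (P I T)) \<le> c1 * sqrt (Af x) * sqrt (Ag x)"
    if x: "x \<in> X" for x
  proof -
    have Q1: "Q c1 (s \<union> x) I J'" using IH1 x unfolding X_def G_def J'_def by blast
    have "(\<Sum>T\<in>Fx x. w T * f' x (P J' T) * g' x (P I T)) \<le>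
        c1 * sqrt (\<Sum>T\<in>Fx x. w T * f' x (P J' T)^2) * sqrt (\<Sum>T\<in>Fx x. w T * g' x (P I T)^2)"
      using Q1 fvar(1)[OF x] gvar(1)[OF x] unfolding Q_def Fx_eq[OF x] by blast
    also have "\<dots> \<le> c1 * sqrt (Af x) * sqrt (Ag x)"
    proof -
      have "0 \<le> Wx x * \<phi> x^2" "0 \<le> Wx x * \<psi> x^2" using Wxpos[OF x] by auto
      hence "(\<Sum>T\<in>Fx x. w T * f' x (P J' T)^2) \<le> Af x" "(\<Sum>T\<in>Fx x. w T * g' x (P I T)^2) \<le> Ag x"
        using fvar(2)[OF x] gvar(2)[OF x] by linarith+
      moreover have "0 \<le> (\<Sum>T\<in>Fx x. w T * f' x (P J' T)^2)" "0 \<le> (\<Sum>T\<in>Fx x. w T * g' x (P I T)^2)"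
        "0 \<le> Af x" using wnn unfolding Af_def by (auto intro!: sum_nonneg)
      ultimately show ?thesis using c1 by (intro mult_mono real_sqrt_le_mono) auto
    qed
    finally show ?thesis .
  qed
  have AfAg_nn: "Af x \<ge> 0" "Ag x \<ge> 0" for x
    unfolding Af_def Ag_def using wnn by (auto intro!: sum_nonneg)
  have sumAf: "(\<Sum>x\<in>X. Af x) = A" and sumAg: "(\<Sum>x\<in>X. Ag x) = B"
    unfolding Af_def Ag_def A_def B_def by (simp_all add: grp)
  have phG: "\<phi> (G T) = \<phi> x" if "T \<in> Fx x" for T x using that unfolding Fx_def by simp
  have b2: "(\<Sum>x\<in>X. Wx x * \<phi> x * \<psi> x) \<le> c2 * sqrt A * sqrt B"
  proof -
    have e: "(\<Sum>x\<in>X. Wx x * \<phi> x * \<psi> x) = (\<Sum>T\<in>Fs s. w T * \<phi> (P {j} T) * g (P I T))"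
    proof -
      have "(\<Sum>x\<in>X. Wx x * \<phi> x * \<psi> x) = (\<Sum>x\<in>X. \<Sum>T\<in>Fx x. w T * \<phi> (G T) * g (P I T))"
      proof (intro sum.cong refl)
        fix x assume x: "x \<in> X"
        have "(\<Sum>T\<in>Fx x. w T * \<phi> (G T) * g (P I T)) = \<phi> x * (\<Sum>T\<in>Fx x. w T * g (P I T))"
          using phG by (simp add: sum_distrib_left mult_ac)
        also have "\<dots> = Wx x * \<phi> x * \<psi> x" using Wxpos[OF x] unfolding \<psi>_def by simp
        finally show "Wx x * \<phi> x * \<psi> x = (\<Sum>T\<in>Fx x. w T * \<phi> (G T) * g (P I T))" by simp
      qed
      then show ?thesis using grp G_def by simp
    qed
    have sq: "(\<Sum>T\<in>Fs s. w T * \<phi> (P {j} T)^2) = (\<Sum>x\<in>X. Wx x * \<phi> x^2)"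
      unfolding grp G_def[symmetric] Wx_def using phG by (simp add: sum_distrib_right)
    have cen: "(\<Sum>T\<in>Fs s. w T * \<phi> (P {j} T)) = 0"
    proof -
      have "(\<Sum>T\<in>Fs s. w T * \<phi> (P {j} T)) = (\<Sum>x\<in>X. Wx x * \<phi> x)"
        unfolding grp G_def[symmetric] Wx_def using phG by (simp add: sum_distrib_right)
      also have "\<dots> = (\<Sum>x\<in>X. \<Sum>T\<in>Fx x. w T * f (P J T))"
      proof (intro sum.cong refl)
        fix x assume x: "x \<in> X"
        have "Wx x \<noteq> 0" using Wxpos[OF x] by simp
        then show "Wx x * \<phi> x = (\<Sum>T\<in>Fx x. w T * f (P J T))" unfolding \<phi>_def by simp
      qed
      also have "\<dots> = 0" using cf grp by simp
      finally show ?thesis .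
    qed
    have "(\<Sum>T\<in>Fs s. w T * \<phi> (P {j} T) * g (P I T)) \<le>
        c2 * sqrt (\<Sum>T\<in>Fs s. w T * \<phi> (P {j} T)^2) * sqrt B"
      using IH2 cen cg unfolding Q_def B_def by blast
    also have "\<dots> \<le> c2 * sqrt A * sqrt B"
    proof -
      have "(\<Sum>x\<in>X. Wx x * \<phi> x^2) \<le> (\<Sum>x\<in>X. Af x)"
      proof (rule sum_mono)
        fix x assume x: "x \<in> X"
        have "0 \<le> (\<Sum>T\<in>Fx x. w T * f' x (P J' T)^2)" using wnn by (auto intro!: sum_nonneg)
        then show "Wx x * \<phi> x^2 \<le> Af x" using fvar(2)[OF x] by linarith
      qed
      moreover have "0 \<le> B" unfolding sumAg[symmetric] using AfAg_nn(2) by (simp add: sum_nonneg)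
      ultimately show ?thesis using sq sumAf c2 by (intro mult_right_mono mult_left_mono real_sqrt_le_mono) auto
    qed
    finally show ?thesis using e by simp
  qed
  have "(\<Sum>T\<in>Fs s. w T * f (P J T) * g (P I T)) =
      (\<Sum>x\<in>X. \<Sum>T\<in>Fx x. w T * f' x (P J' T) * g' x (P I T)) + (\<Sum>x\<in>X. Wx x * \<phi> x * \<psi> x)"
    unfolding grp using decomp by (simp add: sum.distrib)
  also have "\<dots> \<le> (\<Sum>x\<in>X. c1 * (sqrt (Af x) * sqrt (Ag x))) + c2 * sqrt A * sqrt B"
    using b1 b2 by (intro add_mono sum_mono) (auto simp: mult_ac)
  also have "(\<Sum>x\<in>X. c1 * (sqrt (Af x) * sqrt (Ag x))) \<le> c1 * (sqrt A * sqrt B)"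
    unfolding sum_distrib_left[symmetric] using cs_sqrt[OF finX, of Af Ag] AfAg_nn sumAf sumAg c1
    by (intro mult_left_mono) auto
  finally show "(\<Sum>T\<in>Fs s. w T * f (P J T) * g (P I T)) \<le> (c1 + c2) * sqrt A * sqrt B"
    by (simp add: algebra_simps)
qed

end

context cplx begin

lemma Q_all:
  assumes base: "\<And>s i j. i \<noteq> j \<Longrightarrow> i \<le> d \<Longrightarrow> j \<le> d \<Longrightarrow> i \<notin> col ` s \<Longrightarrow> j \<notin> col ` s \<Longrightarrow> Q \<gamma> s {i} {j}"
    and \<gamma>: "\<gamma> \<ge> 0"
  shows "finite I \<Longrightarrow> finite J \<Longrightarrow> I \<noteq> {} \<Longrightarrow> J \<noteq> {} \<Longrightarrow> I \<subseteq> {0..d} \<Longrightarrow> J \<subseteq> {0..d} \<Longrightarrow>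
    I \<inter> J = {} \<Longrightarrow> col ` s \<inter> (I \<union> J) = {} \<Longrightarrow> Q (real (card I) * real (card J) * \<gamma>) s I J"
proof (induction "card I + card J" arbitrary: s I J rule: less_induct)
  case less
  define ok where "ok = (\<lambda>s I J. finite I \<and> finite J \<and> I \<noteq> {} \<and> J \<noteq> {} \<and> I \<subseteq> {0..d} \<and> J \<subseteq> {0..d} \<and>
    I \<inter> J = {} \<and> col ` s \<inter> (I \<union> J) = {})"
  have IH: "\<And>s I' J'. card I' + card J' < card I + card J \<Longrightarrow> ok s I' J' \<Longrightarrow>
      Q (real (card I') * real (card J') * \<gamma>) s I' J'"
    using less.hyps unfolding ok_def by blast
  have step: "Q (real (card I') * real (card J') * \<gamma>) s' I' J'"
    if ok: "ok s' I' J'" and c2: "card J' \<ge> 2" and sm: "card I' + card J' = card I + card J" for s' I' J'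
  proof -
    from ok have fI: "finite I'" and fJ: "finite J'" and Ine: "I' \<noteq> {}" and Isub: "I' \<subseteq> {0..d}"
      and Jsub: "J' \<subseteq> {0..d}" and dis: "I' \<inter> J' = {}" and cs: "col ` s' \<inter> (I' \<union> J') = {}"
      unfolding ok_def by auto
    obtain j where jJ: "j \<in> J'" using c2 by fastforce
    have jd: "j \<le> d" using jJ Jsub by auto
    define J0 where "J0 = J' - {j}"
    have cJ0: "card J0 = card J' - 1" using jJ fJ unfolding J0_def by simp
    have J0ne: "J0 \<noteq> {}" using c2 cJ0 by (metis One_nat_def card.empty diff_is_0_eq not_less_eq_eq numeral_2_eq_2 Suc_le_lessD less_Suc_eq_le le_antisym zero_diff)
    have IH1: "\<forall>x\<in>P {j} ` Fs s'. Q (real (card I') * real (card J0) * \<gamma>) (s' \<union> x) I' (J' - {j})"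
    proof
      fix x assume x: "x \<in> P {j} ` Fs s'"
      then obtain T0 where T0: "T0 \<in> Fs s'" "x = P {j} T0" by auto
      have cx: "col ` x = {j}" using T0 jd col_P[of T0 "{j}"] Fs_sub by auto
      have "ok (s' \<union> x) I' J0"
        using ok cx jJ dis J0ne unfolding ok_def J0_def by auto
      moreover have "card I' + card J0 < card I + card J" using sm cJ0 c2 by linarith
      ultimately show "Q (real (card I') * real (card J0) * \<gamma>) (s' \<union> x) I' (J' - {j})"
        using IH unfolding J0_def by blast
    qed
    have IH2: "Q (real (card I') * real (card {j}) * \<gamma>) s' I' {j}"
    proof -
      have "ok s' I' {j}" using ok jJ dis unfolding ok_def by auto
      moreover have "card I' + card {j} < card I + card J" using sm c2 by simp
      ultimately show ?thesis using IH by blast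
    qed
    have "Q (real (card I') * real (card J0) * \<gamma> + real (card I') * real (card {j}) * \<gamma>) s' I' J'"
      by (rule split_step[OF jd jJ IH1 IH2]) (use \<gamma> in auto)
    moreover have "real (card I') * real (card J0) * \<gamma> + real (card I') * real (card {j}) * \<gamma>
        = real (card I') * real (card J') * \<gamma>"
      using cJ0 c2 by (simp add: of_nat_diff algebra_simps)
    ultimately show ?thesis by simp
  qed
  have okIJ: "ok s I J" using less.prems unfolding ok_def by auto
  show ?case
  proof (cases "card J \<ge> 2")
    case True then show ?thesis using step[OF okIJ] by simp
  next
    case False
    note cJ = False
    show ?thesis
    proof (cases "card I \<ge> 2")
      case True
      have "ok s J I" using okIJ unfolding ok_def by auto
      hence "Q (real (card J) * real (card I) * \<gamma>) s J I" using step[of s J I] True by simp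
      then show ?thesis by (auto dest: Q_sym simp: mult_ac)
    next
      case False
      have "card I > 0" using less.prems(1,3) by (simp add: card_gt_0_iff)
      hence "card I = 1" using False by linarith
      then obtain i where i: "I = {i}" by (auto simp: card_Suc_eq)
      have "card J > 0" using less.prems(2,4) by (simp add: card_gt_0_iff)
      hence "card J = 1" using cJ by linarith
      then obtain j where j: "J = {j}" by (auto simp: card_Suc_eq)
      have "Q \<gamma> s {i} {j}" using less.prems i j by (intro base) auto
      then show ?thesis using i j by simp
    qed
  qed
qed

end

context cplx begin

lemma Fs_empty: "Fs {} = F" by (auto simp: Fs_def)

lemma colored_eq: assumes "S \<subseteq> {0..d}" shows "colored F col S = P S ` F"
proof
  show "colored F col S \<subseteq> P S ` F"
  proof
    fix u assume "u \<in> colored F col S"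
    then obtain T where T: "T \<in> F" "u \<subseteq> T" and cu: "col ` u = S"
      by (auto simp: colored_def faces_def)
    then show "u \<in> P S ` F" using char[OF T(1) cu] by auto
  qed
  show "P S ` F \<subseteq> colored F col S"
    using col_P[OF _ assms] by (auto simp: colored_def faces_def P_def)
qed

lemma colored_col: "u \<in> colored F col S \<Longrightarrow> col ` u = S" by (simp add: colored_def)

lemma Fs_char: assumes "col ` u = S" shows "Fs u = {T\<in>F. P S T = u}"
  using char[OF _ assms] by (auto simp: Fs_def)

lemma colsum:
  assumes S: "S \<subseteq> {0..d}"
  shows "(\<Sum>u\<in>colored F col S. W u * h u) = (\<Sum>T\<in>F. w T * h (P S T))"
proof -
  have "(\<Sum>T\<in>F. w T * h (P S T)) = (\<Sum>u\<in>P S ` F. \<Sum>T\<in>{T\<in>F. P S T = u}. w T * h (P S T))"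
    by (rule sum.image_gen[OF finF])
  also have "\<dots> = (\<Sum>u\<in>colored F col S. W u * h u)"
  proof (rule sum.cong)
    show "P S ` F = colored F col S" using colored_eq[OF S] by simp
  next
    fix u assume u: "u \<in> colored F col S"
    have "(\<Sum>T\<in>{T\<in>F. P S T = u}. w T * h (P S T)) = (\<Sum>T\<in>{T\<in>F. P S T = u}. w T * h u)"
      by (intro sum.cong) auto
    also have "\<dots> = W u * h u" unfolding W_def Fs_char[OF colored_col[OF u]]
      by (simp add: sum_distrib_right)
    finally show "(\<Sum>T\<in>{T\<in>F. P S T = u}. w T * h (P S T)) = W u * h u" .
  qed
  finally show ?thesis by simp
qed

lemma card_colored: assumes "u \<in> colored F col S" shows "card u = card S"
proof -
  from assms obtain T where T: "T \<in> F" "u \<subseteq> T" by (auto simp: colored_def faces_def)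
  have "inj_on col u" using injT[OF T(1)] T(2) by (rule inj_on_subset)
  then show ?thesis using colored_col[OF assms] card_image by fastforce
qed

lemma col_meas_eq:
  assumes S: "S \<subseteq> {0..d}" and u: "u \<in> colored F col S"
  shows "col_meas d F w col S u = W u"
proof -
  define C where "C = real ((d + 1) choose card S)"
  have meas_eq: "meas d F w v = W v / C" if "v \<in> colored F col S" for v
    unfolding meas_def W_def Fs_def C_def using card_colored[OF that] by simp
  have "(\<Sum>v\<in>colored F col S. W v * 1) = (\<Sum>T\<in>F. w T * 1)" by (rule colsum[OF S])
  hence tot: "(\<Sum>v\<in>colored F col S. W v) = 1" using wsum by simp
  have "(\<Sum>v\<in>colored F col S. meas d F w v) = (\<Sum>v\<in>colored F col S. W v / C)"
    using meas_eq by (intro sum.cong) auto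
  also have "\<dots> = 1 / C" using tot by (simp add: sum_divide_distrib[symmetric])
  finally have den: "(\<Sum>v\<in>colored F col S. meas d F w v) = 1 / C" .
  have "card S \<le> d + 1"
  proof -
    from u obtain T where T: "T \<in> F" "u \<subseteq> T" by (auto simp: colored_def faces_def)
    have "card u \<le> card T" using T finT[OF T(1)] by (intro card_mono)
    then show ?thesis using card_colored[OF u] cardT[OF T(1)] by simp
  qed
  hence "C > 0" unfolding C_def by simp
  then show ?thesis unfolding col_meas_def den meas_eq[OF u] by simp
qed

lemma inner_eq:
  assumes S: "S \<subseteq> {0..d}"
  shows "col_inner d F w col S f g = (\<Sum>T\<in>F. w T * f (P S T) * g (P S T))"
proof -
  have "col_inner d F w col S f g = (\<Sum>u\<in>colored F col S. W u * (f u * g u))"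
    unfolding col_inner_def using col_meas_eq[OF S] by (intro sum.cong) auto
  also have "\<dots> = (\<Sum>T\<in>F. w T * (f (P S T) * g (P S T)))" by (rule colsum[OF S])
  finally show ?thesis by (simp add: mult_ac)
qed

lemma walk_num:
  assumes I: "I \<subseteq> {0..d}" and J: "J \<subseteq> {0..d}" and s: "s \<in> colored F col I"
  shows "(\<Sum>t\<in>{t\<in>colored F col J. s \<union> t \<in> colored F col (I \<union> J)}.
           col_meas d F w col (I \<union> J) (s \<union> t) * f t) = (\<Sum>T\<in>Fs s. w T * f (P J T))"
proof -
  let ?A = "{t\<in>colored F col J. s \<union> t \<in> colored F col (I \<union> J)}"
  have cs: "col ` s = I" using colored_col[OF s] .
  have IJ: "I \<union> J \<subseteq> {0..d}" using I J by auto
  have img: "P J ` Fs s = ?A"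
  proof
    show "P J ` Fs s \<subseteq> ?A"
    proof
      fix t assume "t \<in> P J ` Fs s"
      then obtain T where T: "T \<in> Fs s" "t = P J T" by auto
      have TF: "T \<in> F" and sT: "s \<subseteq> T" using T by (auto simp: Fs_def)
      have "P I T = s" using char[OF TF cs] sT by simp
      hence "s \<union> t = P (I \<union> J) T" using T P_Un by simp
      then show "t \<in> ?A" using T TF colored_eq[OF J] colored_eq[OF IJ] by auto
    qed
    show "?A \<subseteq> P J ` Fs s"
    proof
      fix t assume t: "t \<in> ?A"
      then obtain T where TF: "T \<in> F" and sub: "s \<union> t \<subseteq> T"
        by (auto simp: colored_def faces_def)
      have "P J T = t" using char[OF TF colored_col] t sub by auto
      then show "t \<in> P J ` Fs s" using TF sub by (auto simp: Fs_def)
    qed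
  qed
  have "(\<Sum>T\<in>Fs s. w T * f (P J T)) = (\<Sum>t\<in>P J ` Fs s. \<Sum>T\<in>{T\<in>Fs s. P J T = t}. w T * f (P J T))"
    by (rule sum.image_gen[OF finFs])
  also have "\<dots> = (\<Sum>t\<in>?A. col_meas d F w col (I \<union> J) (s \<union> t) * f t)"
  proof (rule sum.cong)
    show "P J ` Fs s = ?A" by (rule img)
  next
    fix t assume t: "t \<in> ?A"
    have ct: "col ` t = J" using t colored_col by auto
    have "{T\<in>Fs s. P J T = t} = Fs (s \<union> t)" using char[OF _ ct] by (auto simp: Fs_def)
    moreover have "col_meas d F w col (I \<union> J) (s \<union> t) = W (s \<union> t)"
      using col_meas_eq[OF IJ] t by auto
    ultimately show "(\<Sum>T\<in>{T\<in>Fs s. P J T = t}. w T * f (P J T)) = col_meas d F w col (I \<union> J) (s \<union> t) * f t"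
      unfolding W_def by (auto simp: sum_distrib_right intro!: sum.cong)
  qed
  finally show ?thesis by simp
qed

lemma walk_inner:
  assumes I: "I \<subseteq> {0..d}" and J: "J \<subseteq> {0..d}"
  shows "col_inner d F w col I (col_walk d F w col I J f) g = (\<Sum>T\<in>F. w T * f (P J T) * g (P I T))"
proof -
  have "col_inner d F w col I (col_walk d F w col I J f) g =
      (\<Sum>s\<in>colored F col I. W s * ((\<Sum>T\<in>Fs s. w T * f (P J T)) / W s * g s))"
    unfolding col_inner_def
  proof (intro sum.cong refl)
    fix s assume s: "s \<in> colored F col I"
    have "col_walk d F w col I J f s = (\<Sum>T\<in>Fs s. w T * f (P J T)) / (\<Sum>T\<in>Fs s. w T * 1)"
      unfolding col_walk_def walk_num[OF I J s] walk_num[OF I J s, of "\<lambda>_. 1", simplified] by simp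
    then show "col_meas d F w col I s * col_walk d F w col I J f s * g s =
        W s * ((\<Sum>T\<in>Fs s. w T * f (P J T)) / W s * g s)"
      using col_meas_eq[OF I s] by (simp add: W_def)
  qed
  also have "\<dots> = (\<Sum>s\<in>colored F col I. (\<Sum>T\<in>Fs s. w T * f (P J T)) * g s)"
  proof (intro sum.cong refl)
    fix s assume s: "s \<in> colored F col I"
    have "Fs s \<noteq> {}" using s by (auto simp: colored_def faces_def Fs_def)
    hence "W s \<noteq> 0" using W_pos[of s] by simp
    then show "W s * ((\<Sum>T\<in>Fs s. w T * f (P J T)) / W s * g s) = (\<Sum>T\<in>Fs s. w T * f (P J T)) * g s"
      by simp
  qed
  also have "\<dots> = (\<Sum>s\<in>P I ` F. \<Sum>T\<in>{T\<in>F. P I T = s}. w T * f (P J T) * g (P I T))"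
  proof (rule sum.cong)
    show "colored F col I = P I ` F" by (rule colored_eq[OF I])
  next
    fix s assume s: "s \<in> P I ` F"
    hence cs: "col ` s = I" using colored_eq[OF I] colored_col by blast
    show "(\<Sum>T\<in>Fs s. w T * f (P J T)) * g s = (\<Sum>T\<in>{T\<in>F. P I T = s}. w T * f (P J T) * g (P I T))"
      unfolding Fs_char[OF cs] by (auto simp: sum_distrib_right intro!: sum.cong)
  qed
  also have "\<dots> = (\<Sum>T\<in>F. w T * f (P J T) * g (P I T))"
    by (rule sum.image_gen[OF finF, symmetric])
  finally show ?thesis .
qed

lemma reduce:
  assumes I: "I \<subseteq> {0..d}" and J: "J \<subseteq> {0..d}" and QQ: "Q c {} I J" and c: "c \<ge> 0"
  shows "bip_lambda d F w col I J \<le> ereal c"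
  unfolding bip_lambda_def
proof (rule Sup_least, clarify)
  fix f g :: "'a set \<Rightarrow> real"
  assume nf: "col_norm d F w col J f = 1" and ng: "col_norm d F w col I g = 1"
    and cf0: "col_inner d F w col J f (\<lambda>_. 1) = 0"
  have cf: "(\<Sum>T\<in>F. w T * f (P J T)) = 0" using cf0 inner_eq[OF J] by simp
  have A1: "(\<Sum>T\<in>F. w T * f (P J T)^2) = 1"
    using nf inner_eq[OF J, of f f] unfolding col_norm_def by (simp add: power2_eq_square mult_ac)
  have B1: "(\<Sum>T\<in>F. w T * g (P I T)^2) = 1"
    using ng inner_eq[OF I, of g g] unfolding col_norm_def by (simp add: power2_eq_square mult_ac)
  define gb where "gb = (\<Sum>T\<in>F. w T * g (P I T))"
  define g' where "g' u = g u - gb" for u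
  have gbq: "gb = (\<Sum>T\<in>F. w T * g (P I T)) / (\<Sum>T\<in>F. w T)" using wsum gb_def by simp
  note v = var_id[of w F gb "\<lambda>T. g (P I T)", OF _ gbq]
  have cg: "(\<Sum>T\<in>F. w T * g' (P I T)) = 0" using v wsum unfolding g'_def by simp
  have B': "(\<Sum>T\<in>F. w T * g' (P I T)^2) \<le> 1" using v wsum B1 unfolding g'_def by simp
  have "(\<Sum>T\<in>F. w T * f (P J T) * g (P I T)) = (\<Sum>T\<in>F. w T * f (P J T) * g' (P I T)) + gb * (\<Sum>T\<in>F. w T * f (P J T))"
    unfolding g'_def by (simp add: algebra_simps sum.distrib sum_subtractf sum_distrib_left)
  also have "\<dots> = (\<Sum>T\<in>F. w T * f (P J T) * g' (P I T))" using cf by simp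
  also have "\<dots> \<le> c * sqrt (\<Sum>T\<in>F. w T * f (P J T)^2) * sqrt (\<Sum>T\<in>F. w T * g' (P I T)^2)"
    using QQ cf cg unfolding Q_def Fs_empty by blast
  also have "\<dots> \<le> c * sqrt 1 * sqrt 1"
  proof -
    have "sqrt (\<Sum>T\<in>F. w T * g' (P I T)^2) \<le> sqrt 1" using B' by (rule real_sqrt_le_mono)
    hence "c * sqrt (\<Sum>T\<in>F. w T * g' (P I T)^2) \<le> c * 1" using c by (intro mult_left_mono) auto
    then show ?thesis using A1 by simp
  qed
  finally show "ereal (col_inner d F w col I (col_walk d F w col I J f) g) \<le> ereal c"
    using walk_inner[OF I J] by simp
qed

end

context cplx begin

definition Ulk :: "'a set \<Rightarrow> 'a set" where
  "Ulk r = {u. u \<notin> r \<and> insert u r \<in> faces F}"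

lemma faces_down: "x \<in> faces F \<Longrightarrow> y \<subseteq> x \<Longrightarrow> y \<in> faces F"
  by (auto simp: faces_def)

lemma fin_Union: "finite (\<Union>F)" using finF finT by auto

lemma fin_Ulk: "finite (Ulk r)"
proof (rule finite_subset[OF _ fin_Union])
  show "Ulk r \<subseteq> \<Union>F" by (auto simp: Ulk_def faces_def)
qed

lemma dc:
  fixes G :: "'a \<Rightarrow> 'a set \<Rightarrow> real"
  shows "(\<Sum>u\<in>Ulk r. \<Sum>T\<in>Fs (insert u r). G u T) = (\<Sum>T\<in>Fs r. \<Sum>u\<in>T - r. G u T)"
proof -
  have "(\<Sum>u\<in>Ulk r. \<Sum>T\<in>Fs (insert u r). G u T) = (\<Sum>u\<in>Ulk r. \<Sum>T\<in>{T. T \<in> F \<and> insert u r \<subseteq> T}. G u T)"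
    by (simp add: Fs_def)
  also have "\<dots> = (\<Sum>T\<in>F. \<Sum>u\<in>{u. u \<in> Ulk r \<and> insert u r \<subseteq> T}. G u T)"
    by (rule sum.swap_restrict[OF fin_Ulk finF])
  also have "\<dots> = (\<Sum>T\<in>F. if r \<subseteq> T then (\<Sum>u\<in>T - r. G u T) else 0)"
  proof (intro sum.cong refl)
    fix T assume T: "T \<in> F"
    show "(\<Sum>u\<in>{u. u \<in> Ulk r \<and> insert u r \<subseteq> T}. G u T) = (if r \<subseteq> T then (\<Sum>u\<in>T - r. G u T) else 0)"
    proof (cases "r \<subseteq> T")
      case True
      have "{u. u \<in> Ulk r \<and> insert u r \<subseteq> T} = T - r"
        using True T by (auto simp: Ulk_def faces_def)
      then show ?thesis using True by simp
    next
      case False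
      have "{u. u \<in> Ulk r \<and> insert u r \<subseteq> T} = {}" using False by auto
      then show ?thesis using False by simp
    qed
  qed
  also have "\<dots> = (\<Sum>T\<in>Fs r. \<Sum>u\<in>T - r. G u T)"
    unfolding Fs_def by (rule sum.inter_filter[OF finF, symmetric])
  finally show ?thesis .
qed

lemma dc_card:
  "(\<Sum>u\<in>Ulk r. W (insert u r)) = real (d + 1 - card r) * W r"
proof -
  have "(\<Sum>u\<in>Ulk r. W (insert u r)) = (\<Sum>T\<in>Fs r. \<Sum>u\<in>T - r. w T)"
    unfolding W_def by (rule dc)
  also have "\<dots> = (\<Sum>T\<in>Fs r. real (d + 1 - card r) * w T)"
  proof (intro sum.cong refl)
    fix T assume T: "T \<in> Fs r"
    hence TF: "T \<in> F" and rT: "r \<subseteq> T" by (auto simp: Fs_def)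
    have "finite r" using rT finT[OF TF] by (rule finite_subset)
    hence "card (T - r) = d + 1 - card r" using card_Diff_subset[OF _ rT] cardT[OF TF] by simp
    then show "(\<Sum>u\<in>T - r. w T) = real (d + 1 - card r) * w T" by simp
  qed
  also have "\<dots> = real (d + 1 - card r) * W r" unfolding W_def by (simp add: sum_distrib_left)
  finally show ?thesis .
qed

lemma sq_pairs:
  fixes h :: "'a \<Rightarrow> real"
  assumes "finite A"
  shows "(\<Sum>v\<in>A. \<Sum>u\<in>A - {v}. h u * h v) = (\<Sum>v\<in>A. h v)^2 - (\<Sum>v\<in>A. h v^2)"
proof -
  have "(\<Sum>v\<in>A. \<Sum>u\<in>A - {v}. h u * h v) = (\<Sum>v\<in>A. h v * (\<Sum>u\<in>A. h u) - h v^2)"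
  proof (intro sum.cong refl)
    fix v assume v: "v \<in> A"
    have "(\<Sum>u\<in>A. h u) = h v + (\<Sum>u\<in>A - {v}. h u)" using v assms by (simp add: sum.remove)
    then show "(\<Sum>u\<in>A - {v}. h u * h v) = h v * (\<Sum>u\<in>A. h u) - h v^2"
      by (simp add: sum_distrib_right[symmetric] power2_eq_square algebra_simps)
  qed
  also have "\<dots> = (\<Sum>v\<in>A. h v)^2 - (\<Sum>v\<in>A. h v^2)"
    by (simp add: sum_subtractf sum_distrib_right[symmetric] power2_eq_square)
  finally show ?thesis .
qed

lemma final_arith:
  fixes S A B m :: real
  assumes A: "A \<ge> 0" and B: "B \<ge> 0" and m: "m \<ge> 0"
    and key: "\<And>\<alpha> \<beta>. 2 * \<alpha> * \<beta> * S \<le> m * (\<alpha>^2 * A + \<beta>^2 * B)"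
    and cs: "S \<le> sqrt A * sqrt B"
  shows "S \<le> m * sqrt A * sqrt B"
proof (cases "A = 0 \<or> B = 0")
  case True then show ?thesis using cs by auto
next
  case False
  hence Ap: "A > 0" and Bp: "B > 0" using A B by auto
  have "2 * sqrt B * sqrt A * S \<le> m * ((sqrt B)^2 * A + (sqrt A)^2 * B)" by (rule key)
  also have "\<dots> = 2 * sqrt B * sqrt A * (m * sqrt A * sqrt B)"
    using A B by (simp add: power2_eq_square[symmetric] real_sqrt_pow2) (simp add: power2_eq_square algebra_simps)
  finally show ?thesis using Ap Bp by (simp add: mult_le_cancel_left_pos)
qed

end

context cplx begin

lemma pair_sum:
  fixes q :: "'a \<Rightarrow> real"
  assumes T: "T \<in> Fs s" and ij: "i \<noteq> j" "i \<notin> col ` s" "j \<notin> col ` s"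
    and q0: "\<And>v. col v \<noteq> i \<Longrightarrow> col v \<noteq> j \<Longrightarrow> q v = 0"
  shows "(\<Sum>v\<in>T - s. q v) = (\<Sum>v\<in>P {i} T. q v) + (\<Sum>v\<in>P {j} T. q v)"
proof -
  have TF: "T \<in> F" using T by (auto simp: Fs_def)
  have sub: "P {i} T \<union> P {j} T \<subseteq> T - s" using ij by (auto simp: P_def)
  have fin: "finite (T - s)" using finT[OF TF] by simp
  have "(\<Sum>v\<in>T - s. q v) = (\<Sum>v\<in>P {i} T \<union> P {j} T. q v)"
    using sub q0 by (intro sum.mono_neutral_right[OF fin]) (auto simp: P_def)
  also have "\<dots> = (\<Sum>v\<in>P {i} T. q v) + (\<Sum>v\<in>P {j} T. q v)"
    using ij(1) fin sub by (intro sum.union_disjoint) (auto simp: P_def intro: finite_subset)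
  finally show ?thesis .
qed

lemma base:
  assumes exp: "one_sided_link_expander d F w \<mu>" and \<mu>: "\<mu> \<ge> 0"
    and ij: "i \<noteq> j" "i \<le> d" "j \<le> d" "i \<notin> col ` s" "j \<notin> col ` s"
  shows "Q ((real d - real (card s)) * \<mu>) s {i} {j}"
  unfolding Q_def
proof (intro allI impI)
  fix f g :: "'a set \<Rightarrow> real"
  assume cf: "(\<Sum>T\<in>Fs s. w T * f (P {j} T)) = 0" and cg: "(\<Sum>T\<in>Fs s. w T * g (P {i} T)) = 0"
  define S where "S = (\<Sum>T\<in>Fs s. w T * f (P {j} T) * g (P {i} T))"
  define A where "A = (\<Sum>T\<in>Fs s. w T * f (P {j} T)^2)"
  define B where "B = (\<Sum>T\<in>Fs s. w T * g (P {i} T)^2)"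
  have wnn: "\<forall>T\<in>Fs s. w T \<ge> 0" using wpos Fs_sub by (auto intro: less_imp_le)
  have An: "A \<ge> 0" and Bn: "B \<ge> 0" unfolding A_def B_def using wnn by (auto intro!: sum_nonneg)
  have CS: "S \<le> sqrt A * sqrt B" unfolding S_def A_def B_def by (rule cs_sum[OF finFs wnn])
  show "S \<le> (real d - real (card s)) * \<mu> * sqrt A * sqrt B"
  proof (cases "Fs s = {}")
    case True then show ?thesis unfolding S_def A_def B_def by simp
  next
    case False
    then obtain T0 where T0: "T0 \<in> Fs s" by auto
    have T0F: "T0 \<in> F" and sT0: "s \<subseteq> T0" using T0 by (auto simp: Fs_def)
    have fins: "finite s" using finite_subset[OF sT0 finT[OF T0F]] .
    obtain vi where vi: "vi \<in> T0" "col vi = i" using colT[OF T0F] ij(2) by force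
    obtain vj where vj: "vj \<in> T0" "col vj = j" using colT[OF T0F] ij(3) by force
    have vis: "vi \<notin> s" "vj \<notin> s" using vi vj ij by auto
    have vij: "vi \<noteq> vj" using vi vj ij by auto
    define k where "k = card s"
    have k2: "k + 2 \<le> d + 1"
    proof -
      have "s \<subseteq> T0 - {vi, vj}" using sT0 vis by auto
      hence "card s \<le> card (T0 - {vi, vj})" using finT[OF T0F] by (intro card_mono) auto
      also have "\<dots> = card T0 - 2" using vi vj vij finT[OF T0F] by (simp add: card_Diff_subset)
      finally have "card s \<le> card T0 - 2" .
      moreover have "d \<ge> 1" using ij(1,2,3) by linarith
      ultimately show ?thesis using cardT[OF T0F] unfolding k_def by arith
    qed
    have sface: "s \<in> faces F" using T0F sT0 by (auto simp: faces_def)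
    have lam2: "link_lambda2_le d F w s \<mu>"
      using exp sface k2 unfolding one_sided_link_expander_def k_def by auto
    define L where "L = link_verts F s"
    have LU: "L = Ulk s" by (simp add: L_def link_verts_def Ulk_def)
    have finL: "finite L" using LU fin_Ulk by simp
    have viL: "vi \<in> L" using vi vis T0F sT0 unfolding L_def link_verts_def faces_def by auto
    define C1 where "C1 = real ((d + 1) choose (k + 1))"
    define C2 where "C2 = real ((d + 1) choose (k + 2))"
    have b1: "0 < (d + 1) choose (k + 1)" by (rule zero_less_binomial) (use k2 in simp)
    have b2: "0 < (d + 1) choose (k + 2)" by (rule zero_less_binomial) (use k2 in simp)
    have C1p: "C1 > 0" and C2p: "C2 > 0" unfolding C1_def C2_def using b1 b2 by (simp_all only: of_nat_0_less_iff)
    have Wv: "W (insert v s) > 0" if "v \<in> L" for v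
    proof -
      from that obtain T where "T \<in> F" "insert v s \<subseteq> T" by (auto simp: L_def link_verts_def faces_def)
      then show ?thesis by (intro W_pos) (auto simp: Fs_def)
    qed
    have meas1: "meas d F w (insert v s) = W (insert v s) / C1" if "v \<in> L" for v
    proof -
      have "card (insert v s) = k + 1" using that fins by (simp add: L_def link_verts_def k_def)
      then show ?thesis unfolding meas_def W_def Fs_def C1_def by simp
    qed
    define Z where "Z = (\<Sum>v\<in>L. meas d F w (insert v s))"
    have "Z = (\<Sum>v\<in>L. W (insert v s)) / C1" unfolding Z_def using meas1
      by (simp add: sum_divide_distrib)
    hence Zeq: "Z = real (d + 1 - k) * W s / C1" using dc_card[of s] LU k_def by simp
    have Zp: "Z > 0" using Zeq W_pos[OF False] C1p k2 by simp
    define c1 where "c1 = 1 / (C1 * Z)"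
    have c1p: "c1 > 0" using C1p Zp by (simp add: c1_def)
    have vm: "link_vmeas d F w s v = c1 * W (insert v s)" if "v \<in> L" for v
      unfolding link_vmeas_def L_def[symmetric] Z_def[symmetric] meas1[OF that] c1_def by simp
    define N where "N v = {u\<in>L. u \<noteq> v \<and> insert u (insert v s) \<in> faces F}" for v
    have NU: "N v = Ulk (insert v s)" if "v \<in> L" for v
      using that unfolding N_def L_def link_verts_def Ulk_def
      by (auto intro: faces_down)
    have meas2: "meas d F w (insert u (insert v s)) = W (insert u (insert v s)) / C2" if "v \<in> L" "u \<in> N v" for u v
    proof -
      have "card (insert u (insert v s)) = k + 2"
        using that fins by (simp add: N_def L_def link_verts_def k_def)
      then show ?thesis unfolding meas_def W_def Fs_def C2_def by simp
    qed
    define c0 where "c0 = (real d - real k) / C2"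
    have c0p: "c0 > 0" using C2p k2 unfolding c0_def by simp
    define D where "D v = (\<Sum>u\<in>N v. meas d F w (insert u (insert v s)))" for v
    have Deq: "D v = c0 * W (insert v s)" if v: "v \<in> L" for v
    proof -
      have "D v = (\<Sum>u\<in>N v. W (insert u (insert v s))) / C2"
        unfolding D_def using meas2[OF v] by (simp add: sum_divide_distrib)
      also have "(\<Sum>u\<in>N v. W (insert u (insert v s))) = real (d + 1 - card (insert v s)) * W (insert v s)"
        unfolding NU[OF v] by (rule dc_card)
      also have "card (insert v s) = k + 1" using v fins by (simp add: L_def link_verts_def k_def)
      finally show ?thesis unfolding c0_def using k2 by (simp add: of_nat_diff)
    qed
    define \<kappa> where "\<kappa> = c1 / c0"
    define a where "a v u = \<kappa> * (if v \<in> L \<and> u \<in> L \<and> u \<noteq> v \<and> insert u (insert v s) \<in> faces F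
        then meas d F w (insert u (insert v s)) else 0)" for v u
    have rowq: "(\<Sum>u\<in>L. a v u * q u) = \<kappa> * (\<Sum>u\<in>N v. meas d F w (insert u (insert v s)) * q u)"
      if v: "v \<in> L" for v and q :: "'a \<Rightarrow> real"
    proof -
      have "(\<Sum>u\<in>L. a v u * q u) = \<kappa> * (\<Sum>u\<in>L. if u \<noteq> v \<and> insert u (insert v s) \<in> faces F
          then meas d F w (insert u (insert v s)) * q u else 0)"
      proof -
        have "(\<Sum>u\<in>L. a v u * q u) = (\<Sum>u\<in>L. \<kappa> * (if u \<noteq> v \<and> insert u (insert v s) \<in> faces F
          then meas d F w (insert u (insert v s)) * q u else 0))"
          unfolding a_def using v by (intro sum.cong refl) auto
        then show ?thesis by (simp add: sum_distrib_left)
      qed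
      also have "(\<Sum>u\<in>L. if u \<noteq> v \<and> insert u (insert v s) \<in> faces F
          then meas d F w (insert u (insert v s)) * q u else 0) = (\<Sum>u\<in>N v. meas d F w (insert u (insert v s)) * q u)"
        unfolding N_def by (rule sum.inter_filter[OF finL, symmetric])
      finally show ?thesis .
    qed
    have sym: "\<forall>u\<in>L. \<forall>v\<in>L. a u v = a v u" unfolding a_def by (auto simp: insert_commute)
    have rows: "\<forall>v\<in>L. (\<Sum>u\<in>L. a v u) = link_vmeas d F w s v"
    proof
      fix v assume v: "v \<in> L"
      have "(\<Sum>u\<in>L. a v u) = (\<Sum>u\<in>L. a v u * 1)" by simp
      also have "\<dots> = \<kappa> * D v" unfolding rowq[OF v] D_def by simp
      also have "\<dots> = link_vmeas d F w s v" unfolding Deq[OF v] vm[OF v] \<kappa>_def using c0p by simp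
      finally show "(\<Sum>u\<in>L. a v u) = link_vmeas d F w s v" .
    qed
    have Kdef: "link_vmeas d F w s v * link_walk d F w s q v = (\<Sum>u\<in>L. a v u * q u)" if v: "v \<in> L" for q v
    proof -
      have lw: "link_walk d F w s q v = (\<Sum>u\<in>N v. meas d F w (insert u (insert v s)) * q u) / D v"
        unfolding link_walk_def N_def D_def L_def by simp
      have "D v > 0" using Deq[OF v] c0p Wv[OF v] by simp
      then show ?thesis unfolding lw rowq[OF v] vm[OF v] Deq[OF v] \<kappa>_def using c0p Wv[OF v]
        by (simp add: field_simps)
    qed
    have pos: "\<forall>v\<in>L. link_vmeas d F w s v > 0" using vm Wv c1p by simp
    have eig: "\<forall>(q::'a \<Rightarrow> real) \<theta>. (\<exists>v\<in>L. q v \<noteq> 0) \<and> (\<Sum>v\<in>L. link_vmeas d F w s v * q v) = 0 \<and>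
                 (\<forall>v\<in>L. link_walk d F w s q v = \<theta> * q v) \<longrightarrow> \<theta> \<le> \<mu>"
      using lam2 unfolding link_lambda2_le_def L_def by blast
    have Lsum: "(\<Sum>v\<in>L. link_vmeas d F w s v * q v) = c1 * (\<Sum>T\<in>Fs s. w T * (\<Sum>v\<in>T - s. q v))" for q
    proof -
      have "(\<Sum>v\<in>L. link_vmeas d F w s v * q v) = c1 * (\<Sum>v\<in>Ulk s. \<Sum>T\<in>Fs (insert v s). w T * q v)"
        unfolding LU[symmetric] using vm by (simp add: sum_distrib_left W_def sum_distrib_right mult_ac)
      also have "\<dots> = c1 * (\<Sum>T\<in>Fs s. \<Sum>v\<in>T - s. w T * q v)" by (simp add: dc)
      finally show ?thesis by (simp add: sum_distrib_left)
    qed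
    have Bsum: "bil L a q q = (c1 / (real d - real k)) * (\<Sum>T\<in>Fs s. w T * ((\<Sum>v\<in>T - s. q v)^2 - (\<Sum>v\<in>T - s. q v^2)))" for q
    proof -
      define H where "H v T = (\<Sum>u\<in>T - insert v s. w T * q u * q v)" for v T
      have "bil L a q q = (\<Sum>v\<in>L. (\<Sum>u\<in>L. a v u * q u) * q v)"
        unfolding bil_def by (simp only: sum_distrib_right)
      also have "\<dots> = (\<Sum>v\<in>Ulk s. \<kappa> / C2 * (\<Sum>T\<in>Fs (insert v s). H v T))"
        unfolding LU[symmetric]
      proof (intro sum.cong refl)
        fix v assume v: "v \<in> L"
        have "(\<Sum>u\<in>N v. meas d F w (insert u (insert v s)) * q u) = (\<Sum>u\<in>N v. W (insert u (insert v s)) * q u) / C2"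
          using meas2[OF v] by (simp add: sum_divide_distrib)
        hence "(\<Sum>u\<in>L. a v u * q u) * q v = \<kappa> / C2 * ((\<Sum>u\<in>Ulk (insert v s). W (insert u (insert v s)) * q u) * q v)"
          unfolding rowq[OF v] NU[OF v] by simp
        also have "(\<Sum>u\<in>Ulk (insert v s). W (insert u (insert v s)) * q u) * q v =
            (\<Sum>u\<in>Ulk (insert v s). \<Sum>T\<in>Fs (insert u (insert v s)). w T * q u * q v)"
          unfolding W_def by (simp only: sum_distrib_right)
        also have "\<dots> = (\<Sum>T\<in>Fs (insert v s). H v T)"
          unfolding H_def by (rule dc[where r="insert v s" and G="\<lambda>u T. w T * q u * q v"])
        finally show "(\<Sum>u\<in>L. a v u * q u) * q v = \<kappa> / C2 * (\<Sum>T\<in>Fs (insert v s). H v T)" .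
      qed
      also have "\<dots> = \<kappa> / C2 * (\<Sum>v\<in>Ulk s. \<Sum>T\<in>Fs (insert v s). H v T)"
        by (simp only: sum_distrib_left)
      also have "(\<Sum>v\<in>Ulk s. \<Sum>T\<in>Fs (insert v s). H v T) = (\<Sum>T\<in>Fs s. \<Sum>v\<in>T - s. H v T)"
        by (rule dc)
      also have "(\<Sum>T\<in>Fs s. \<Sum>v\<in>T - s. H v T) = (\<Sum>T\<in>Fs s. w T * ((\<Sum>v\<in>T - s. q v)^2 - (\<Sum>v\<in>T - s. q v^2)))"
      proof (intro sum.cong refl)
        fix T assume T: "T \<in> Fs s"
        have fin: "finite (T - s)" using T finT Fs_sub by auto
        have "(\<Sum>v\<in>T - s. H v T) = (\<Sum>v\<in>T - s. w T * (\<Sum>u\<in>(T - s) - {v}. q u * q v))"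
        proof (intro sum.cong refl)
          fix v assume "v \<in> T - s"
          have "T - insert v s = (T - s) - {v}" by auto
          then show "H v T = w T * (\<Sum>u\<in>(T - s) - {v}. q u * q v)"
            unfolding H_def by (simp add: sum_distrib_left mult.assoc)
        qed
        also have "\<dots> = w T * (\<Sum>v\<in>T - s. \<Sum>u\<in>(T - s) - {v}. q u * q v)"
          by (simp only: sum_distrib_left)
        finally show "(\<Sum>v\<in>T - s. H v T) = w T * ((\<Sum>v\<in>T - s. q v)^2 - (\<Sum>v\<in>T - s. q v^2))"
          using sq_pairs[OF fin, of q] by simp
      qed
      also have "\<kappa> / C2 = c1 / (real d - real k)" unfolding \<kappa>_def c0_def using C2p by simp
      finally show ?thesis .
    qed
    have key: "2 * \<alpha> * \<beta> * S \<le> ((real d - real k) * \<mu>) * (\<alpha>^2 * A + \<beta>^2 * B)" for \<alpha> \<beta>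
    proof -
      define h where "h v = (if col v = j then \<alpha> * f {v} else if col v = i then \<beta> * g {v} else 0)" for v
      have hT: "(\<Sum>v\<in>T - s. h v) = \<alpha> * f (P {j} T) + \<beta> * g (P {i} T)"
        and hT2: "(\<Sum>v\<in>T - s. h v^2) = \<alpha>^2 * f (P {j} T)^2 + \<beta>^2 * g (P {i} T)^2" if T: "T \<in> Fs s" for T
      proof -
        have TF: "T \<in> F" using T by (auto simp: Fs_def)
        obtain ui where ui: "col ui = i" "P {i} T = {ui}" using P_single[OF TF ij(2)] by metis
        obtain uj where uj: "col uj = j" "P {j} T = {uj}" using P_single[OF TF ij(3)] by metis
        have z: "col v \<noteq> i \<Longrightarrow> col v \<noteq> j \<Longrightarrow> h v = 0" for v unfolding h_def by simp
        have z2: "col v \<noteq> i \<Longrightarrow> col v \<noteq> j \<Longrightarrow> h v^2 = 0" for v unfolding h_def by simp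
        show "(\<Sum>v\<in>T - s. h v) = \<alpha> * f (P {j} T) + \<beta> * g (P {i} T)"
        proof -
          have "(\<Sum>v\<in>T - s. h v) = (\<Sum>v\<in>P {i} T. h v) + (\<Sum>v\<in>P {j} T. h v)"
            by (rule pair_sum[OF T ij(1,4,5)]) (rule z)
          then show ?thesis using ui uj ij(1) by (simp add: h_def)
        qed
        show "(\<Sum>v\<in>T - s. h v^2) = \<alpha>^2 * f (P {j} T)^2 + \<beta>^2 * g (P {i} T)^2"
        proof -
          have "(\<Sum>v\<in>T - s. h v^2) = (\<Sum>v\<in>P {i} T. h v^2) + (\<Sum>v\<in>P {j} T. h v^2)"
            by (rule pair_sum[OF T ij(1,4,5)]) (rule z2)
          then show ?thesis using ui uj ij(1) by (simp add: h_def power_mult_distrib)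
        qed
      qed
      have cent: "(\<Sum>v\<in>L. link_vmeas d F w s v * h v) = 0"
      proof -
        have "(\<Sum>T\<in>Fs s. w T * (\<Sum>v\<in>T - s. h v)) = \<alpha> * (\<Sum>T\<in>Fs s. w T * f (P {j} T)) + \<beta> * (\<Sum>T\<in>Fs s. w T * g (P {i} T))"
          using hT by (simp add: sum.distrib sum_distrib_left algebra_simps)
        then show ?thesis unfolding Lsum using cf cg by simp
      qed
      have sp: "bil L a h h \<le> \<mu> * (\<Sum>v\<in>L. link_vmeas d F w s v * h v^2)"
        by (rule spectral_abstract[OF finL pos sym rows Kdef eig cent])
      have lhs: "bil L a h h = (c1 / (real d - real k)) * (2 * \<alpha> * \<beta> * S)"
      proof -
        have "(\<Sum>T\<in>Fs s. w T * ((\<Sum>v\<in>T - s. h v)^2 - (\<Sum>v\<in>T - s. h v^2))) = (\<Sum>T\<in>Fs s. 2 * \<alpha> * \<beta> * (w T * f (P {j} T) * g (P {i} T)))"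
          using hT hT2 by (intro sum.cong refl) (simp add: power2_eq_square algebra_simps)
        then show ?thesis unfolding Bsum S_def by (simp add: sum_distrib_left)
      qed
      have rhs: "(\<Sum>v\<in>L. link_vmeas d F w s v * h v^2) = c1 * (\<alpha>^2 * A + \<beta>^2 * B)"
      proof -
        have "(\<Sum>T\<in>Fs s. w T * (\<Sum>v\<in>T - s. h v^2)) = (\<Sum>T\<in>Fs s. \<alpha>^2 * (w T * f (P {j} T)^2) + \<beta>^2 * (w T * g (P {i} T)^2))"
          using hT2 by (intro sum.cong refl) (simp add: algebra_simps)
        then show ?thesis unfolding Lsum A_def B_def by (simp add: sum.distrib sum_distrib_left)
      qed
      have dk: "real d - real k > 0" using k2 by simp
      from sp lhs rhs have "c1 / (real d - real k) * (2 * \<alpha> * \<beta> * S) \<le> \<mu> * (c1 * (\<alpha>^2 * A + \<beta>^2 * B))" by simp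
      hence "c1 * (2 * \<alpha> * \<beta> * S) \<le> c1 * (((real d - real k) * \<mu>) * (\<alpha>^2 * A + \<beta>^2 * B))"
        using dk by (simp add: field_simps)
      then show ?thesis using c1p by (simp add: mult_le_cancel_left_pos)
    qed
    have m: "(real d - real k) * \<mu> \<ge> 0" using k2 \<mu> by simp
    have "S \<le> ((real d - real k) * \<mu>) * sqrt A * sqrt B" by (rule final_arith[OF An Bn m key CS])
    then show ?thesis unfolding k_def .
  qed
qed

end

lemma trick_arith:
  fixes A B \<Phi> \<Psi> \<sigma> g :: real
  assumes "0 \<le> \<Phi>" "\<Phi> \<le> A" "0 \<le> \<Psi>" "\<Psi> \<le> B"
    and p: "sqrt \<Phi> \<le> \<sigma> * sqrt A" and q: "sqrt \<Psi> \<le> \<sigma> * sqrt B"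
    and g: "0 \<le> g" "g \<le> 1" and \<sigma>: "\<sigma> \<ge> 0"
  shows "g * sqrt (A - \<Phi>) * sqrt (B - \<Psi>) + sqrt \<Phi> * sqrt \<Psi> \<le> (g + (1 - g) * \<sigma>^2) * sqrt A * sqrt B"
proof -
  define a where "a = sqrt A"
  define b where "b = sqrt B"
  define p where "p = sqrt \<Phi>"
  define q where "q = sqrt \<Psi>"
  have A0: "0 \<le> A" and B0: "0 \<le> B" using assms(1-4) by linarith+
  have A: "A = a^2" and B: "B = b^2" and P: "\<Phi> = p^2" and Qq: "\<Psi> = q^2"
    using assms(1,3) A0 B0 unfolding a_def b_def p_def q_def by auto
  have nn: "a \<ge> 0" "b \<ge> 0" "p \<ge> 0" "q \<ge> 0" unfolding a_def b_def p_def q_def using A0 B0 assms(1,3) by auto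
  have pa: "p \<le> a" and qb: "q \<le> b" unfolding a_def b_def p_def q_def using assms by auto
  have pq: "p * q \<le> a * b" using pa qb nn by (intro mult_mono) auto
  have "(A - \<Phi>) * (B - \<Psi>) \<le> (a * b - p * q)^2"
  proof -
    have "(a * b - p * q)^2 - (A - \<Phi>) * (B - \<Psi>) = (a * q - p * b)^2"
      unfolding A B P Qq by (simp add: power2_eq_square algebra_simps)
    then show ?thesis using zero_le_power2[of "a * q - p * b"] by linarith
  qed
  hence "sqrt ((A - \<Phi>) * (B - \<Psi>)) \<le> sqrt ((a * b - p * q)^2)" by (rule real_sqrt_le_mono)
  hence s1: "sqrt (A - \<Phi>) * sqrt (B - \<Psi>) \<le> a * b - p * q" using pq by (simp add: real_sqrt_mult)
  have pq2: "p * q \<le> \<sigma>^2 * (a * b)"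
  proof -
    have "0 \<le> \<sigma> * a" using \<sigma> nn by simp
    moreover have "p \<le> \<sigma> * a" "q \<le> \<sigma> * b" using p q unfolding p_def q_def a_def b_def by auto
    ultimately have "p * q \<le> (\<sigma> * a) * (\<sigma> * b)" using nn by (intro mult_mono) auto
    then show ?thesis by (simp add: power2_eq_square mult_ac)
  qed
  have "g * sqrt (A - \<Phi>) * sqrt (B - \<Psi>) + sqrt \<Phi> * sqrt \<Psi> \<le> g * (a * b - p * q) + p * q"
    using s1 g unfolding p_def q_def by (simp add: mult.assoc mult_left_mono)
  also have "\<dots> = g * (a * b) + (1 - g) * (p * q)" by (simp add: algebra_simps)
  also have "\<dots> \<le> g * (a * b) + (1 - g) * (\<sigma>^2 * (a * b))" using pq2 g by (intro add_left_mono mult_left_mono) auto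
  also have "\<dots> = (g + (1 - g) * \<sigma>^2) * sqrt A * sqrt B" unfolding a_def b_def by (simp add: algebra_simps)
  finally show ?thesis .
qed

context cplx begin

lemma Q_mono: "Q c s I J \<Longrightarrow> c \<le> c' \<Longrightarrow> Q c' s I J"
  unfolding Q_def
proof (intro allI impI)
  fix f g assume H: "\<forall>f g. (\<Sum>T\<in>Fs s. w T * f (P J T)) = 0 \<longrightarrow> (\<Sum>T\<in>Fs s. w T * g (P I T)) = 0 \<longrightarrow>
     (\<Sum>T\<in>Fs s. w T * f (P J T) * g (P I T)) \<le> c * sqrt (\<Sum>T\<in>Fs s. w T * f (P J T)^2) * sqrt (\<Sum>T\<in>Fs s. w T * g (P I T)^2)"
    and cc: "c \<le> c'" and cf: "(\<Sum>T\<in>Fs s. w T * f (P J T)) = 0" and cg: "(\<Sum>T\<in>Fs s. w T * g (P I T)) = 0"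
  have wnn: "\<forall>T\<in>Fs s. w T \<ge> 0" using wpos Fs_sub by (auto intro: less_imp_le)
  have "0 \<le> (\<Sum>T\<in>Fs s. w T * f (P J T)^2)" "0 \<le> (\<Sum>T\<in>Fs s. w T * g (P I T)^2)"
    using wnn by (auto intro!: sum_nonneg)
  hence "0 \<le> sqrt (\<Sum>T\<in>Fs s. w T * f (P J T)^2) * sqrt (\<Sum>T\<in>Fs s. w T * g (P I T)^2)" by simp
  hence "c * (sqrt (\<Sum>T\<in>Fs s. w T * f (P J T)^2) * sqrt (\<Sum>T\<in>Fs s. w T * g (P I T)^2)) \<le>
      c' * (sqrt (\<Sum>T\<in>Fs s. w T * f (P J T)^2) * sqrt (\<Sum>T\<in>Fs s. w T * g (P I T)^2))"
    using cc by (rule mult_right_mono[rotated])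
  moreover have "(\<Sum>T\<in>Fs s. w T * f (P J T) * g (P I T)) \<le> c * sqrt (\<Sum>T\<in>Fs s. w T * f (P J T)^2) * sqrt (\<Sum>T\<in>Fs s. w T * g (P I T)^2)"
    using H cf cg by blast
  ultimately show "(\<Sum>T\<in>Fs s. w T * f (P J T) * g (P I T)) \<le> c' * sqrt (\<Sum>T\<in>Fs s. w T * f (P J T)^2) * sqrt (\<Sum>T\<in>Fs s. w T * g (P I T)^2)"
    by (simp only: mult.assoc)
qed

lemma Q_one: "Q 1 s I J"
  unfolding Q_def
proof (intro allI impI)
  fix f g :: "'a set \<Rightarrow> real"
  have wnn: "\<forall>T\<in>Fs s. w T \<ge> 0" using wpos Fs_sub by (auto intro: less_imp_le)
  show "(\<Sum>T\<in>Fs s. w T * f (P J T) * g (P I T)) \<le> 1 * sqrt (\<Sum>T\<in>Fs s. w T * f (P J T)^2) * sqrt (\<Sum>T\<in>Fs s. w T * g (P I T)^2)"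
    using cs_sum[OF finFs wnn, of "\<lambda>T. f (P J T)" "\<lambda>T. g (P I T)"] by simp
qed

lemma Q_empty: "Fs s = {} \<Longrightarrow> Q c s I J" unfolding Q_def by simp

end

lemma sqrt_contr:
  fixes \<Phi> \<sigma> A :: real
  assumes P: "\<Phi> \<ge> 0" and s: "\<sigma> \<ge> 0" and A: "A \<ge> 0" and h: "\<Phi> \<le> \<sigma> * sqrt A * sqrt \<Phi>"
  shows "sqrt \<Phi> \<le> \<sigma> * sqrt A"
proof (cases "\<Phi> = 0")
  case True then show ?thesis using s A by simp
next
  case False
  hence sp: "sqrt \<Phi> > 0" using P by simp
  have "sqrt \<Phi> * sqrt \<Phi> \<le> (\<sigma> * sqrt A) * sqrt \<Phi>" using h P by simp
  then show ?thesis using sp by (rule mult_right_le_imp_le)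
qed

context cplx begin

lemma trickle_step:
  assumes k: "k \<le> d"
    and IH: "\<forall>x\<in>P {k} ` Fs s. Q g0 (s \<union> x) {i} {j}"
    and Skj: "Q \<sigma> s {k} {j}" and Ski: "Q \<sigma> s {k} {i}"
    and g0: "0 \<le> g0" "g0 \<le> 1" and \<sigma>: "\<sigma> \<ge> 0"
  shows "Q (g0 + (1 - g0) * \<sigma>^2) s {i} {j}"
  unfolding Q_def
proof (intro allI impI)
  fix f g :: "'a set \<Rightarrow> real"
  assume cf: "(\<Sum>T\<in>Fs s. w T * f (P {j} T)) = 0" and cg: "(\<Sum>T\<in>Fs s. w T * g (P {i} T)) = 0"
  define G where "G = P {k}"
  define X where "X = G ` Fs s"
  define Fx where "Fx x = {T\<in>Fs s. G T = x}" for x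
  define Wx where "Wx x = (\<Sum>T\<in>Fx x. w T)" for x
  define A where "A = (\<Sum>T\<in>Fs s. w T * f (P {j} T)^2)"
  define B where "B = (\<Sum>T\<in>Fs s. w T * g (P {i} T)^2)"
  define Af where "Af x = (\<Sum>T\<in>Fx x. w T * f (P {j} T)^2)" for x
  define Ag where "Ag x = (\<Sum>T\<in>Fx x. w T * g (P {i} T)^2)" for x
  have finX: "finite X" unfolding X_def using finFs by simp
  have Fx_eq: "Fx x = Fs (s \<union> x)" if "x \<in> X" for x
    using Fs_split[of x k s] that k unfolding Fx_def X_def G_def by simp
  have Fx_ne: "Fx x \<noteq> {}" if "x \<in> X" for x using that unfolding Fx_def X_def by auto
  have Wxpos: "Wx x > 0" if "x \<in> X" for x
    using W_pos[of "s \<union> x"] Fx_eq[OF that] Fx_ne[OF that] unfolding Wx_def W_def by simp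
  have wnn: "\<forall>T\<in>Fx x. w T \<ge> 0" for x using wpos Fs_sub unfolding Fx_def by (auto intro: less_imp_le)
  have wnn0: "\<forall>T\<in>Fs s. w T \<ge> 0" using wpos Fs_sub by (auto intro: less_imp_le)
  have grp: "(\<Sum>T\<in>Fs s. H T) = (\<Sum>x\<in>X. \<Sum>T\<in>Fx x. H T)" for H :: "'a set \<Rightarrow> real"
    unfolding X_def Fx_def by (rule sum.image_gen[OF finFs])
  define \<phi> where "\<phi> x = (\<Sum>T\<in>Fx x. w T * f (P {j} T)) / Wx x" for x
  define \<psi> where "\<psi> x = (\<Sum>T\<in>Fx x. w T * g (P {i} T)) / Wx x" for x
  define f' where "f' x y = f y - \<phi> x" for x y
  define g' where "g' x y = g y - \<psi> x" for x y
  have fvar: "(\<Sum>T\<in>Fx x. w T * f' x (P {j} T)) = 0"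
    "(\<Sum>T\<in>Fx x. w T * f' x (P {j} T)^2) = Af x - Wx x * \<phi> x^2" if x: "x \<in> X" for x
  proof -
    note v = var_id[of w "Fx x" "\<phi> x" "\<lambda>T. f (P {j} T)"]
    show "(\<Sum>T\<in>Fx x. w T * f' x (P {j} T)) = 0"
      using v Wxpos[OF x] unfolding Wx_def \<phi>_def f'_def by simp
    show "(\<Sum>T\<in>Fx x. w T * f' x (P {j} T)^2) = Af x - Wx x * \<phi> x^2"
      using v Wxpos[OF x] unfolding Wx_def \<phi>_def Af_def f'_def by simp
  qed
  have gvar: "(\<Sum>T\<in>Fx x. w T * g' x (P {i} T)) = 0"
    "(\<Sum>T\<in>Fx x. w T * g' x (P {i} T)^2) = Ag x - Wx x * \<psi> x^2" if x: "x \<in> X" for x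
  proof -
    note v = var_id[of w "Fx x" "\<psi> x" "\<lambda>T. g (P {i} T)"]
    show "(\<Sum>T\<in>Fx x. w T * g' x (P {i} T)) = 0"
      using v Wxpos[OF x] unfolding Wx_def \<psi>_def g'_def by simp
    show "(\<Sum>T\<in>Fx x. w T * g' x (P {i} T)^2) = Ag x - Wx x * \<psi> x^2"
      using v Wxpos[OF x] unfolding Wx_def \<psi>_def Ag_def g'_def by simp
  qed
  have fvnn: "0 \<le> Af x - Wx x * \<phi> x^2" "0 \<le> Ag x - Wx x * \<psi> x^2" if x: "x \<in> X" for x
    using fvar(2)[OF x, symmetric] gvar(2)[OF x, symmetric] wnn[of x] by (auto intro!: sum_nonneg)
  have decomp: "(\<Sum>T\<in>Fx x. w T * f (P {j} T) * g (P {i} T)) =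
      (\<Sum>T\<in>Fx x. w T * f' x (P {j} T) * g' x (P {i} T)) + Wx x * \<phi> x * \<psi> x" if x: "x \<in> X" for x
  proof -
    have mf: "(\<Sum>T\<in>Fx x. w T * f (P {j} T)) = \<phi> x * Wx x" using Wxpos[OF x] unfolding \<phi>_def by simp
    have mg: "(\<Sum>T\<in>Fx x. w T * g (P {i} T)) = \<psi> x * Wx x" using Wxpos[OF x] unfolding \<psi>_def by simp
    have "(\<Sum>T\<in>Fx x. w T * f' x (P {j} T) * g' x (P {i} T)) =
          (\<Sum>T\<in>Fx x. w T * f (P {j} T) * g (P {i} T) - \<psi> x * (w T * f (P {j} T)) - \<phi> x * (w T * g (P {i} T)) + \<phi> x * \<psi> x * w T)"
      by (intro sum.cong refl) (simp add: f'_def g'_def algebra_simps)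
    also have "\<dots> = (\<Sum>T\<in>Fx x. w T * f (P {j} T) * g (P {i} T)) - \<psi> x * (\<Sum>T\<in>Fx x. w T * f (P {j} T))
        - \<phi> x * (\<Sum>T\<in>Fx x. w T * g (P {i} T)) + \<phi> x * \<psi> x * Wx x"
      unfolding Wx_def by (simp add: sum.distrib sum_subtractf sum_distrib_left)
    finally show ?thesis using mf mg by (simp add: algebra_simps)
  qed
  have b1: "(\<Sum>T\<in>Fx x. w T * f' x (P {j} T) * g' x (P {i} T)) \<le>
      g0 * sqrt (Af x - Wx x * \<phi> x^2) * sqrt (Ag x - Wx x * \<psi> x^2)" if x: "x \<in> X" for x
  proof -
    have Q1: "Q g0 (s \<union> x) {i} {j}" using IH x unfolding X_def G_def by blast
    have "(\<Sum>T\<in>Fs (s \<union> x). w T * f' x (P {j} T) * g' x (P {i} T)) \<le>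
       g0 * sqrt (\<Sum>T\<in>Fs (s \<union> x). w T * f' x (P {j} T)^2) * sqrt (\<Sum>T\<in>Fs (s \<union> x). w T * g' x (P {i} T)^2)"
      using Q1 fvar(1)[OF x] gvar(1)[OF x] unfolding Q_def Fx_eq[OF x] by blast
    then show ?thesis using fvar(2)[OF x] gvar(2)[OF x] unfolding Fx_eq[OF x] by simp
  qed
  define \<Phi> where "\<Phi> = (\<Sum>x\<in>X. Wx x * \<phi> x^2)"
  define \<Psi> where "\<Psi> = (\<Sum>x\<in>X. Wx x * \<psi> x^2)"
  have sumAf: "(\<Sum>x\<in>X. Af x) = A" and sumAg: "(\<Sum>x\<in>X. Ag x) = B"
    unfolding Af_def Ag_def A_def B_def by (simp_all add: grp)
  have phG: "\<phi> (G T) = \<phi> x" "\<psi> (G T) = \<psi> x" if "T \<in> Fx x" for T x using that unfolding Fx_def by simp_all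
  have Wnn: "\<forall>x\<in>X. Wx x \<ge> 0" using Wxpos by (auto intro: less_imp_le)
  have PhiA: "\<Phi> \<le> A" and PsiB: "\<Psi> \<le> B"
  proof -
    have "(\<Sum>x\<in>X. Wx x * \<phi> x^2) \<le> (\<Sum>x\<in>X. Af x)" using fvnn(1) by (intro sum_mono) auto
    then show "\<Phi> \<le> A" using sumAf \<Phi>_def by simp
    have "(\<Sum>x\<in>X. Wx x * \<psi> x^2) \<le> (\<Sum>x\<in>X. Ag x)" using fvnn(2) by (intro sum_mono) auto
    then show "\<Psi> \<le> B" using sumAg \<Psi>_def by simp
  qed
  have Phin: "\<Phi> \<ge> 0" "\<Psi> \<ge> 0" unfolding \<Phi>_def \<Psi>_def using Wnn by (auto intro!: sum_nonneg)
  have contr: "sqrt \<Phi> \<le> \<sigma> * sqrt A"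
  proof -
    have e1: "(\<Sum>T\<in>Fs s. w T * f (P {j} T) * \<phi> (P {k} T)) = \<Phi>"
    proof -
      have "(\<Sum>T\<in>Fs s. w T * f (P {j} T) * \<phi> (P {k} T)) = (\<Sum>x\<in>X. \<Sum>T\<in>Fx x. w T * f (P {j} T) * \<phi> (G T))"
        unfolding grp G_def ..
      also have "\<dots> = (\<Sum>x\<in>X. \<phi> x * (\<Sum>T\<in>Fx x. w T * f (P {j} T)))"
        using phG by (intro sum.cong refl) (simp add: sum_distrib_left mult_ac)
      also have "\<dots> = \<Phi>" unfolding \<Phi>_def
      proof (intro sum.cong refl)
        fix x assume x: "x \<in> X"
        have "Wx x \<noteq> 0" using Wxpos[OF x] by simp
        then show "\<phi> x * (\<Sum>T\<in>Fx x. w T * f (P {j} T)) = Wx x * \<phi> x^2" unfolding \<phi>_def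
          by (simp add: power2_eq_square)
      qed
      finally show ?thesis .
    qed
    have e2: "(\<Sum>T\<in>Fs s. w T * \<phi> (P {k} T)^2) = \<Phi>"
      unfolding grp G_def[symmetric] Wx_def \<Phi>_def using phG by (simp add: sum_distrib_right)
    have cen: "(\<Sum>T\<in>Fs s. w T * \<phi> (P {k} T)) = 0"
    proof -
      have "(\<Sum>T\<in>Fs s. w T * \<phi> (P {k} T)) = (\<Sum>x\<in>X. Wx x * \<phi> x)"
        unfolding grp G_def[symmetric] Wx_def using phG by (simp add: sum_distrib_right)
      also have "\<dots> = (\<Sum>x\<in>X. \<Sum>T\<in>Fx x. w T * f (P {j} T))"
      proof (intro sum.cong refl)
        fix x assume x: "x \<in> X"
        have "Wx x \<noteq> 0" using Wxpos[OF x] by simp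
        then show "Wx x * \<phi> x = (\<Sum>T\<in>Fx x. w T * f (P {j} T))" unfolding \<phi>_def by simp
      qed
      also have "\<dots> = 0" using cf grp by simp
      finally show ?thesis .
    qed
    have "(\<Sum>T\<in>Fs s. w T * f (P {j} T) * \<phi> (P {k} T)) \<le>
        \<sigma> * sqrt (\<Sum>T\<in>Fs s. w T * f (P {j} T)^2) * sqrt (\<Sum>T\<in>Fs s. w T * \<phi> (P {k} T)^2)"
      using Skj cf cen unfolding Q_def by blast
    hence "\<Phi> \<le> \<sigma> * sqrt A * sqrt \<Phi>" unfolding e1 e2 A_def .
    moreover have "A \<ge> 0" unfolding A_def using wnn0 by (auto intro!: sum_nonneg)
    ultimately show ?thesis using Phin(1) \<sigma> by (intro sqrt_contr)
  qed
  have contr2: "sqrt \<Psi> \<le> \<sigma> * sqrt B"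
  proof -
    have e1: "(\<Sum>T\<in>Fs s. w T * g (P {i} T) * \<psi> (P {k} T)) = \<Psi>"
    proof -
      have "(\<Sum>T\<in>Fs s. w T * g (P {i} T) * \<psi> (P {k} T)) = (\<Sum>x\<in>X. \<Sum>T\<in>Fx x. w T * g (P {i} T) * \<psi> (G T))"
        unfolding grp G_def ..
      also have "\<dots> = (\<Sum>x\<in>X. \<psi> x * (\<Sum>T\<in>Fx x. w T * g (P {i} T)))"
        using phG by (intro sum.cong refl) (simp add: sum_distrib_left mult_ac)
      also have "\<dots> = \<Psi>" unfolding \<Psi>_def
      proof (intro sum.cong refl)
        fix x assume x: "x \<in> X"
        have "Wx x \<noteq> 0" using Wxpos[OF x] by simp
        then show "\<psi> x * (\<Sum>T\<in>Fx x. w T * g (P {i} T)) = Wx x * \<psi> x^2" unfolding \<psi>_def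
          by (simp add: power2_eq_square)
      qed
      finally show ?thesis .
    qed
    have e2: "(\<Sum>T\<in>Fs s. w T * \<psi> (P {k} T)^2) = \<Psi>"
      unfolding grp G_def[symmetric] Wx_def \<Psi>_def using phG by (simp add: sum_distrib_right)
    have cen: "(\<Sum>T\<in>Fs s. w T * \<psi> (P {k} T)) = 0"
    proof -
      have "(\<Sum>T\<in>Fs s. w T * \<psi> (P {k} T)) = (\<Sum>x\<in>X. Wx x * \<psi> x)"
        unfolding grp G_def[symmetric] Wx_def using phG by (simp add: sum_distrib_right)
      also have "\<dots> = (\<Sum>x\<in>X. \<Sum>T\<in>Fx x. w T * g (P {i} T))"
      proof (intro sum.cong refl)
        fix x assume x: "x \<in> X"
        have "Wx x \<noteq> 0" using Wxpos[OF x] by simp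
        then show "Wx x * \<psi> x = (\<Sum>T\<in>Fx x. w T * g (P {i} T))" unfolding \<psi>_def by simp
      qed
      also have "\<dots> = 0" using cg grp by simp
      finally show ?thesis .
    qed
    have "(\<Sum>T\<in>Fs s. w T * g (P {i} T) * \<psi> (P {k} T)) \<le>
        \<sigma> * sqrt (\<Sum>T\<in>Fs s. w T * g (P {i} T)^2) * sqrt (\<Sum>T\<in>Fs s. w T * \<psi> (P {k} T)^2)"
      using Ski cg cen unfolding Q_def by blast
    hence "\<Psi> \<le> \<sigma> * sqrt B * sqrt \<Psi>" unfolding e1 e2 B_def .
    moreover have "B \<ge> 0" unfolding B_def using wnn0 by (auto intro!: sum_nonneg)
    ultimately show ?thesis using Phin(2) \<sigma> by (intro sqrt_contr)
  qed
  have b2: "(\<Sum>x\<in>X. Wx x * \<phi> x * \<psi> x) \<le> sqrt \<Phi> * sqrt \<Psi>"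
    unfolding \<Phi>_def \<Psi>_def by (rule cs_sum[OF finX Wnn])
  have "(\<Sum>T\<in>Fs s. w T * f (P {j} T) * g (P {i} T)) =
      (\<Sum>x\<in>X. \<Sum>T\<in>Fx x. w T * f' x (P {j} T) * g' x (P {i} T)) + (\<Sum>x\<in>X. Wx x * \<phi> x * \<psi> x)"
    unfolding grp using decomp by (simp add: sum.distrib)
  also have "\<dots> \<le> (\<Sum>x\<in>X. g0 * (sqrt (Af x - Wx x * \<phi> x^2) * sqrt (Ag x - Wx x * \<psi> x^2))) + sqrt \<Phi> * sqrt \<Psi>"
    using b1 b2 by (intro add_mono sum_mono) (auto simp: mult_ac)
  also have "(\<Sum>x\<in>X. g0 * (sqrt (Af x - Wx x * \<phi> x^2) * sqrt (Ag x - Wx x * \<psi> x^2))) \<le>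
      g0 * (sqrt (A - \<Phi>) * sqrt (B - \<Psi>))"
  proof -
    have "(\<Sum>x\<in>X. sqrt (Af x - Wx x * \<phi> x^2) * sqrt (Ag x - Wx x * \<psi> x^2)) \<le>
        sqrt (\<Sum>x\<in>X. Af x - Wx x * \<phi> x^2) * sqrt (\<Sum>x\<in>X. Ag x - Wx x * \<psi> x^2)"
      by (rule cs_sqrt[OF finX]) (use fvnn in auto)
    also have "(\<Sum>x\<in>X. Af x - Wx x * \<phi> x^2) = A - \<Phi>" unfolding \<Phi>_def sumAf[symmetric] by (simp add: sum_subtractf)
    also have "(\<Sum>x\<in>X. Ag x - Wx x * \<psi> x^2) = B - \<Psi>" unfolding \<Psi>_def sumAg[symmetric] by (simp add: sum_subtractf)
    finally show ?thesis unfolding sum_distrib_left[symmetric] using g0 by (intro mult_left_mono) auto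
  qed
  also have "g0 * (sqrt (A - \<Phi>) * sqrt (B - \<Psi>)) + sqrt \<Phi> * sqrt \<Psi> \<le> (g0 + (1 - g0) * \<sigma>^2) * sqrt A * sqrt B"
    using trick_arith[OF Phin(1) PhiA Phin(2) PsiB contr contr2 g0 \<sigma>] by (simp add: mult.assoc)
  finally show "(\<Sum>T\<in>Fs s. w T * f (P {j} T) * g (P {i} T)) \<le> (g0 + (1 - g0) * \<sigma>^2) * sqrt A * sqrt B"
    by simp
qed

end

lemma quad_bound:
  fixes \<sigma> g :: real
  assumes "\<sigma> < 1" "g < 1" "\<sigma> \<le> g + (1 - g) * \<sigma>^2"
  shows "\<sigma> \<le> g / (1 - g)"
proof -
  have "(\<sigma> - 1) * ((1 - g) * \<sigma> - g) = (1 - g) * \<sigma>^2 - \<sigma> + g" by (simp add: power2_eq_square algebra_simps)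
  hence "(\<sigma> - 1) * ((1 - g) * \<sigma> - g) \<ge> 0" using assms(3) by linarith
  hence "(1 - g) * \<sigma> - g \<le> 0" using assms(1) by (simp add: mult_le_0_iff zero_le_mult_iff)
  hence "(1 - g) * \<sigma> \<le> g" by simp
  then show ?thesis using assms(2) by (simp add: field_simps)
qed

context cplx begin

lemma card_col_face: assumes "Fs s \<noteq> {}" shows "card (col ` s) = card s" "col ` s \<subseteq> {0..d}"
proof -
  from assms obtain T where T: "T \<in> F" "s \<subseteq> T" by (auto simp: Fs_def)
  have "inj_on col s" using injT[OF T(1)] T(2) by (rule inj_on_subset)
  then show "card (col ` s) = card s" by (rule card_image)
  show "col ` s \<subseteq> {0..d}" using colT[OF T(1)] T(2) by auto
qed

lemma card_outside: assumes "Fs s \<noteq> {}" shows "card ({0..d} - col ` s) = d + 1 - card s"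
  using card_col_face[OF assms] by (simp add: card_Diff_subset finite_subset)

lemma TD:
  assumes exp: "one_sided_link_expander d F w \<mu>" and \<mu>: "\<mu> \<ge> 0" and d\<mu>: "real d * \<mu> < 1"
  shows "\<forall>s i j. card s + n + 1 = d \<longrightarrow> i \<noteq> j \<longrightarrow> i \<le> d \<longrightarrow> j \<le> d \<longrightarrow> i \<notin> col ` s \<longrightarrow> j \<notin> col ` s
           \<longrightarrow> Q (\<mu> / (1 - real n * \<mu>)) s {i} {j}"
proof (induction n)
  case 0
  show ?case
  proof (intro allI impI)
    fix s i j assume h: "card s + 0 + 1 = d" "i \<noteq> j" "i \<le> d" "j \<le> d" "i \<notin> col ` s" "j \<notin> col ` s"
    have "Q ((real d - real (card s)) * \<mu>) s {i} {j}" by (rule base[OF exp \<mu> h(2-6)])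
    moreover have "real d - real (card s) = 1" using h(1) by simp
    ultimately show "Q (\<mu> / (1 - real 0 * \<mu>)) s {i} {j}" by simp
  qed
next
  case (Suc m)
  define g' where "g' = \<mu> / (1 - real m * \<mu>)"
  show ?case
  proof (intro allI impI)
    fix s i j assume h: "card s + Suc m + 1 = d" "i \<noteq> j" "i \<le> d" "j \<le> d" "i \<notin> col ` s" "j \<notin> col ` s"
    have md: "real m + 2 \<le> real d" using h(1) by simp
    have m1: "(real m + 1) * \<mu> < 1"
    proof -
      have "(real m + 1) * \<mu> \<le> real d * \<mu>" using md \<mu> by (intro mult_right_mono) auto
      then show ?thesis using d\<mu> by linarith
    qed
    have den: "1 - real m * \<mu> > 0" using m1 \<mu> by (simp add: algebra_simps)
    have g'0: "0 \<le> g'" unfolding g'_def using den \<mu> by simp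
    have g'1: "g' < 1" unfolding g'_def using den m1 by (simp add: field_simps)
    have e: "1 - g' = (1 - (real m + 1) * \<mu>) / (1 - real m * \<mu>)"
      unfolding g'_def using den by (simp add: field_simps)
    have target: "g' / (1 - g') = \<mu> / (1 - real (Suc m) * \<mu>)"
      unfolding e using den by (simp add: g'_def)
    show "Q (\<mu> / (1 - real (Suc m) * \<mu>)) s {i} {j}"
    proof (cases "Fs s = {}")
      case True then show ?thesis by (rule Q_empty)
    next
      case False
      define good where "good c \<longleftrightarrow> c \<ge> 0 \<and> (\<forall>a b. a \<noteq> b \<longrightarrow> a \<le> d \<longrightarrow> b \<le> d \<longrightarrow> a \<notin> col ` s \<longrightarrow> b \<notin> col ` s \<longrightarrow> Q c s {a} {b})" for c
      define \<sigma> where "\<sigma> = Inf {c. good c}"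
      have good1: "good 1" unfolding good_def using Q_one by auto
      have ne: "{c. good c} \<noteq> {}" using good1 by auto
      have bdd: "bdd_below {c. good c}" unfolding good_def by (auto intro: bdd_belowI[of _ 0])
      have \<sigma>0: "\<sigma> \<ge> 0" unfolding \<sigma>_def using ne by (intro cInf_greatest) (auto simp: good_def)
      have \<sigma>low: "\<sigma> \<le> c" if "good c" for c unfolding \<sigma>_def using that bdd by (intro cInf_lower) auto
      have good\<sigma>: "good \<sigma>"
        unfolding good_def
      proof (intro conjI allI impI \<sigma>0)
        fix a b assume ab: "a \<noteq> b" "a \<le> d" "b \<le> d" "a \<notin> col ` s" "b \<notin> col ` s"
        show "Q \<sigma> s {a} {b}"
          unfolding Q_def
        proof (intro allI impI)
          fix f g :: "'a set \<Rightarrow> real"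
          assume cf: "(\<Sum>T\<in>Fs s. w T * f (P {b} T)) = 0" and cg: "(\<Sum>T\<in>Fs s. w T * g (P {a} T)) = 0"
          define S where "S = (\<Sum>T\<in>Fs s. w T * f (P {b} T) * g (P {a} T))"
          define Xv where "Xv = sqrt (\<Sum>T\<in>Fs s. w T * f (P {b} T)^2) * sqrt (\<Sum>T\<in>Fs s. w T * g (P {a} T)^2)"
          have all: "S \<le> c * Xv" if "good c" for c
            using that ab cf cg unfolding good_def Q_def S_def Xv_def by (simp add: mult.assoc)
          have wnn: "\<forall>T\<in>Fs s. w T \<ge> 0" using wpos Fs_sub by (auto intro: less_imp_le)
          have Xnn: "Xv \<ge> 0" unfolding Xv_def using wnn by (auto intro!: sum_nonneg mult_nonneg_nonneg)
          have "S \<le> \<sigma> * Xv"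
          proof (cases "Xv = 0")
            case True then show ?thesis using all[OF good1] by simp
          next
            case False
            hence Xp: "Xv > 0" using Xnn by simp
            have "S / Xv \<le> \<sigma>" unfolding \<sigma>_def
            proof (rule cInf_greatest[OF ne])
              fix c assume "c \<in> {c. good c}"
              then show "S / Xv \<le> c" using all Xp by (simp add: divide_le_eq)
            qed
            then show ?thesis using Xp by (simp add: divide_le_eq mult.commute)
          qed
          then show "S \<le> \<sigma> * sqrt (\<Sum>T\<in>Fs s. w T * f (P {b} T)^2) * sqrt (\<Sum>T\<in>Fs s. w T * g (P {a} T)^2)"
            unfolding Xv_def by (simp add: mult.assoc)
        qed
      qed
      have \<sigma>1: "\<sigma> < 1"
      proof -
        have "good ((real d - real (card s)) * \<mu>)"
          unfolding good_def using base[OF exp \<mu>] h(1) \<mu> by auto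
        hence "\<sigma> \<le> (real d - real (card s)) * \<mu>" by (rule \<sigma>low)
        also have "\<dots> \<le> real d * \<mu>" using \<mu> by (simp add: mult_right_mono)
        finally show ?thesis using d\<mu> by linarith
      qed
      have step: "good (g' + (1 - g') * \<sigma>^2)"
        unfolding good_def
      proof (intro conjI allI impI)
        show "0 \<le> g' + (1 - g') * \<sigma>^2" using g'0 g'1 by simp
        fix a b assume ab: "a \<noteq> b" "a \<le> d" "b \<le> d" "a \<notin> col ` s" "b \<notin> col ` s"
        obtain k where k: "k \<le> d" "k \<notin> col ` s" "k \<noteq> a" "k \<noteq> b"
        proof -
          have "card ({0..d} - col ` s) = d + 1 - card s" by (rule card_outside[OF False])
          hence c3: "card ({0..d} - col ` s) \<ge> 3" using h(1) by simp
          have "\<not> ({0..d} - col ` s \<subseteq> {a, b})"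
          proof
            assume "{0..d} - col ` s \<subseteq> {a, b}"
            hence "card ({0..d} - col ` s) \<le> card {a, b}" by (intro card_mono) auto
            also have "\<dots> \<le> 2" by (simp add: card_insert_le_m1)
            finally show False using c3 by simp
          qed
          then obtain k where "k \<in> {0..d} - col ` s" "k \<notin> {a, b}" by blast
          then show ?thesis using that by auto
        qed
        have IH: "\<forall>x\<in>P {k} ` Fs s. Q g' (s \<union> x) {a} {b}"
        proof
          fix x assume x: "x \<in> P {k} ` Fs s"
          then obtain T where T: "T \<in> Fs s" "x = P {k} T" by auto
          have TF: "T \<in> F" using T by (auto simp: Fs_def)
          obtain v where v: "v \<in> T" "col v = k" "P {k} T = {v}" using P_single[OF TF k(1)] by metis
          have vs: "v \<notin> s" using v k by auto
          have fs: "finite s" using T finT TF by (auto simp: Fs_def intro: finite_subset)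
          have "card (s \<union> x) = card s + 1" using T v vs fs by simp
          hence c: "card (s \<union> x) + m + 1 = d" using h(1) by simp
          have cx: "col ` (s \<union> x) = col ` s \<union> {k}" using T v by auto
          show "Q g' (s \<union> x) {a} {b}"
            using Suc.IH c ab k cx unfolding g'_def by auto
        qed
        have Skb: "Q \<sigma> s {k} {b}" and Ska: "Q \<sigma> s {k} {a}"
          using good\<sigma> k ab unfolding good_def by auto
        show "Q (g' + (1 - g') * \<sigma>^2) s {a} {b}"
          by (rule trickle_step[OF k(1) IH Skb Ska g'0 _ \<sigma>0]) (use g'1 in simp)
      qed
      have "\<sigma> \<le> g' + (1 - g') * \<sigma>^2" by (rule \<sigma>low[OF step])
      hence "\<sigma> \<le> g' / (1 - g')" by (rule quad_bound[OF \<sigma>1 g'1])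
      hence "\<sigma> \<le> \<mu> / (1 - real (Suc m) * \<mu>)" using target by simp
      moreover have "Q \<sigma> s {i} {j}" using good\<sigma> h(2-6) unfolding good_def by blast
      ultimately show ?thesis using Q_mono by blast
    qed
  qed
qed

end

context cplx begin

lemma base_all:
  assumes exp: "one_sided_link_expander d F w \<mu>" and \<mu>: "\<mu> \<ge> 0" and d\<mu>: "real d * \<mu> < 1"
    and h: "i \<noteq> j" "i \<le> d" "j \<le> d" "i \<notin> col ` s" "j \<notin> col ` s"
  shows "Q (\<mu> / (1 - (real d - 1) * \<mu>)) s {i} {j}"
proof (cases "Fs s = {}")
  case True then show ?thesis by (rule Q_empty)
next
  case False
  have sub: "{i, j} \<subseteq> {0..d} - col ` s" using h by auto
  have "card {i, j} \<le> card ({0..d} - col ` s)" by (rule card_mono[OF _ sub]) simp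
  hence c2: "2 \<le> d + 1 - card s" using card_outside[OF False] h(1) by simp
  define n where "n = d - 1 - card s"
  have cn: "card s + n + 1 = d" using c2 unfolding n_def by simp
  have Qn: "Q (\<mu> / (1 - real n * \<mu>)) s {i} {j}" using TD[OF exp \<mu> d\<mu>, of n] cn h by blast
  have nd: "real n \<le> real d - 1" using cn by simp
  have den: "1 - (real d - 1) * \<mu> > 0"
  proof -
    have "(real d - 1) * \<mu> \<le> real d * \<mu>" using \<mu> by (simp add: mult_right_mono)
    then show ?thesis using d\<mu> by linarith
  qed
  have "real n * \<mu> \<le> (real d - 1) * \<mu>" using nd \<mu> by (rule mult_right_mono)
  hence "1 - (real d - 1) * \<mu> \<le> 1 - real n * \<mu>" by simp
  hence "\<mu> / (1 - real n * \<mu>) \<le> \<mu> / (1 - (real d - 1) * \<mu>)"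
    using den \<mu> by (intro divide_left_mono) (auto intro: mult_pos_pos)
  then show ?thesis using Qn Q_mono by blast
qed

end

theorem theorem7p1:
  fixes d :: nat and F :: "'a set set" and w :: "'a set \<Rightarrow> real"
    and col :: "'a \<Rightarrow> nat" and lam :: real and I J :: "nat set"
  assumes "weighted_complex d F w"
    and "partite d F col"
    and "0 < lam" and "lam < 1/2"
    and "one_sided_link_expander d F w (lam / ((real d + 1) * lam + 1))"
    and "I \<subseteq> {0..d}" and "J \<subseteq> {0..d}"
    and "I \<noteq> {}" and "J \<noteq> {}" and "I \<inter> J = {}"
  shows "bip_lambda d F w col I J \<le> ereal (real (card I) * real (card J) * lam)"
proof -
  interpret cplx d F w col using assms(1,2) by unfold_locales
  define \<mu> where "\<mu> = lam / ((real d + 1) * lam + 1)"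
  have den: "(real d + 1) * lam + 1 > 0" using assms(3) by (simp add: add_pos_pos)
  have \<mu>p: "\<mu> \<ge> 0" unfolding \<mu>_def using den assms(3) by simp
  have d\<mu>: "real d * \<mu> < 1" unfolding \<mu>_def using den assms(3) by (simp add: field_simps)
  define \<gamma> where "\<gamma> = \<mu> / (1 - (real d - 1) * \<mu>)"
  have den2: "1 - (real d - 1) * \<mu> > 0"
  proof -
    have "(real d - 1) * \<mu> \<le> real d * \<mu>" using \<mu>p by (simp add: mult_right_mono)
    then show ?thesis using d\<mu> by linarith
  qed
  have \<gamma>p: "\<gamma> \<ge> 0" unfolding \<gamma>_def using \<mu>p den2 by simp
  have \<gamma>eq: "\<gamma> = lam / (2 * lam + 1)"
  proof -
    have "1 - (real d - 1) * \<mu> = (2 * lam + 1) / ((real d + 1) * lam + 1)"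
      unfolding \<mu>_def using den by (simp add: field_simps)
    then show ?thesis unfolding \<gamma>_def using den assms(3) by (simp add: \<mu>_def)
  qed
  have \<gamma>le: "\<gamma> \<le> lam" unfolding \<gamma>eq using assms(3) by (simp add: field_simps)
  have bs: "Q \<gamma> s {i} {j}" if "i \<noteq> j" "i \<le> d" "j \<le> d" "i \<notin> col ` s" "j \<notin> col ` s" for s i j
    unfolding \<gamma>_def by (rule base_all[OF assms(5)[folded \<mu>_def] \<mu>p d\<mu> that])
  have fI: "finite I" and fJ: "finite J" using assms(6,7) finite_subset by blast+
  have QQ: "Q (real (card I) * real (card J) * \<gamma>) {} I J"
    by (rule Q_all[OF bs \<gamma>p fI fJ assms(8,9,6,7,10)]) auto
  have "bip_lambda d F w col I J \<le> ereal (real (card I) * real (card J) * \<gamma>)"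
    by (rule reduce[OF assms(6,7) QQ]) (use \<gamma>p in simp)
  also have "\<dots> \<le> ereal (real (card I) * real (card J) * lam)"
    using \<gamma>le by (simp add: mult_left_mono)
  finally show ?thesis .
qed

end
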